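(* Let $G$, $H$, $J$ be rooted graphs. Then for any integers $g,j\ge 0$ and $h\ge 1$, \[ X_{S^{ghj}(G,H,J)}=X_{S^{(g+j)h0}(G,H,J)}+\sum_{i=1}^{j}\Big(X_{P^{g+h+i-1}(G,H)}\,X_{J^{j-i}}-X_{G^{g+i-1}}\,X_{P^{h+j-i}(H,J)}\Big). \]
   Context: All graphs are finite simple graphs. The chromatic symmetric function of a graph $G$ is $X_G=\sum_{\kappa}\prod_{v\in V(G)}x_{\kappa(v)}$, where $\kappa$ ranges over proper colorings $\kappa:V(G)\to\{1,2,\dots\}$. For nonnegative integers $\tau_1,\tau_2,\tau_3$ and rooted graphs $(G_i,u_i)$, $S^{\tau_1\tau_2\tau_3}(G_1,G_2,G_3)$ is obtained by taking a center vertex $c$ and three paths from $c$, disjoint except at $c$, of lengths $\tau_1,\tau_2,\tau_3$, and identifying $u_i$ with the far end $s_i$ of the $i$-th path ($s_i=c$ if $\tau_i=0$), the $G_i$ being disjoint. For rooted graphs $(G,u)$, $(H,v)$ and $k\ge0$, $P^k(G,H)$ is obtained from the disjoint union of $G$ and $H$ by adding a path of length $k$ joining $u$ and $v$ (for $k=0$ identifying them), and $G^k=P^k(G,K_1)$ is $G$ with a pendant path of length $k$ at its root. *)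

theory Defs
  imports Main "HOL-Library.FuncSet" "HOL-Library.Poly_Mapping"
begin

type_synonym 'v graph = "'v set \<times> 'v set set"

definition wf_graph :: "'v graph \<Rightarrow> bool" where
  "wf_graph G \<longleftrightarrow> finite (fst G) \<and> (\<forall>e\<in>snd G. e \<subseteq> fst G \<and> card e = 2)"

definition quot_graph :: "'v graph \<Rightarrow> ('v \<times> 'v) set \<Rightarrow> 'v set graph" where
  "quot_graph G R =
     (let r = (R \<union> R\<inverse>)\<^sup>*; cls = (\<lambda>x. r `` {x})
      in (cls ` fst G, (\<lambda>e. cls ` e) ` snd G))"

text \<open>Monomials x^m with m a finitely supported exponent vector; a formal power series
  (symmetric function) is its coefficient function.\<close>
type_synonym sfun = "(nat \<Rightarrow>\<^sub>0 nat) \<Rightarrow> int"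

definition sf_times :: "sfun \<Rightarrow> sfun \<Rightarrow> sfun" where
  "sf_times f g m = (\<Sum>p\<in>{p. fst p + snd p = m}. f (fst p) * g (snd p))"

text \<open>Chromatic symmetric function: coefficient of x^m is the number of proper colorings
  \<kappa> : V \<rightarrow> {1,2,...} with |\<kappa>^{-1}(c)| = m(c) for all colors c.\<close>
definition proper_coloring :: "'v graph \<Rightarrow> ('v \<Rightarrow> nat) \<Rightarrow> bool" where
  "proper_coloring G \<kappa> \<longleftrightarrow>
     \<kappa> \<in> fst G \<rightarrow>\<^sub>E {1..} \<and> (\<forall>e\<in>snd G. \<forall>x\<in>e. \<forall>y\<in>e. x \<noteq> y \<longrightarrow> \<kappa> x \<noteq> \<kappa> y)"

definition csf :: "'v graph \<Rightarrow> sfun" where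
  "csf G m = int (card {\<kappa>. proper_coloring G \<kappa> \<and>
                          (\<forall>c. card {v\<in>fst G. \<kappa> v = c} = Poly_Mapping.lookup m c)})"

text \<open>P^k(G,H): disjoint union of G and H plus a path of length k (vertices 0..k) from root u
  to root v; path vertex 0 is identified with u and path vertex k with v.\<close>
definition Pk_graph :: "nat \<Rightarrow> 'a graph \<Rightarrow> 'a \<Rightarrow> 'b graph \<Rightarrow> 'b \<Rightarrow> (('a + 'b) + nat) set graph" where
  "Pk_graph k G u H v = quot_graph
     ((Inl \<circ> Inl) ` fst G \<union> (Inl \<circ> Inr) ` fst H \<union> Inr ` {0..k},
      (\<lambda>e. (Inl \<circ> Inl) ` e) ` snd G \<union> (\<lambda>e. (Inl \<circ> Inr) ` e) ` snd H
        \<union> {{Inr i, Inr (Suc i)} | i. i < k})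
     {(Inr 0, Inl (Inl u)), (Inr k, Inl (Inr v))}"

definition K1 :: "unit graph" where "K1 = ({()}, {})"

definition pendant :: "'a graph \<Rightarrow> 'a \<Rightarrow> nat \<Rightarrow> (('a + unit) + nat) set graph" where
  "pendant G u k = Pk_graph k G u K1 ()"

text \<open>S^{t1 t2 t3}(G,H,J): path vertices (i,s), i \<in> {1,2,3}, 0 \<le> s \<le> t_i; all (i,0) are the
  center c, and (i,t_i) is identified with the root of the i-th graph.\<close>
definition S_graph :: "nat \<Rightarrow> nat \<Rightarrow> nat \<Rightarrow> 'a graph \<Rightarrow> 'a \<Rightarrow> 'b graph \<Rightarrow> 'b \<Rightarrow> 'c graph \<Rightarrow> 'c
    \<Rightarrow> (('a + 'b + 'c) + nat \<times> nat) set graph" where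
  "S_graph t1 t2 t3 G u H v J w = quot_graph
     ((Inl \<circ> Inl) ` fst G \<union> (Inl \<circ> Inr \<circ> Inl) ` fst H \<union> (Inl \<circ> Inr \<circ> Inr) ` fst J
        \<union> Inr ` ({(1, s) | s. s \<le> t1} \<union> {(2, s) | s. s \<le> t2} \<union> {(3, s) | s. s \<le> t3}),
      (\<lambda>e. (Inl \<circ> Inl) ` e) ` snd G \<union> (\<lambda>e. (Inl \<circ> Inr \<circ> Inl) ` e) ` snd H
        \<union> (\<lambda>e. (Inl \<circ> Inr \<circ> Inr) ` e) ` snd J
        \<union> {{Inr (1, s), Inr (1, Suc s)} | s. s < t1}
        \<union> {{Inr (2, s), Inr (2, Suc s)} | s. s < t2}
        \<union> {{Inr (3, s), Inr (3, Suc s)} | s. s < t3})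
     {(Inr (2, 0), Inr (1, 0)), (Inr (3, 0), Inr (1, 0)),
      (Inr (1, t1), Inl (Inl u)), (Inr (2, t2), Inl (Inr (Inl v))), (Inr (3, t3), Inl (Inr (Inr w)))}"

end

theory Submission
  imports Defs
begin



definition CS :: "'v graph \<Rightarrow> (nat \<Rightarrow>\<^sub>0 nat) \<Rightarrow> ('v \<Rightarrow> nat) set" where
  "CS X m = {\<kappa>. proper_coloring X \<kappa> \<and> (\<forall>c. card {v\<in>fst X. \<kappa> v = c} = Poly_Mapping.lookup m c)}"

lemma csf_CS: "csf X m = int (card (CS X m))"
  by (simp add: csf_def CS_def)

lemma CS_finite:
  assumes "finite (fst X)" shows "finite (CS X m)"
proof -
  have "CS X m \<subseteq> PiE (fst X) (\<lambda>_. Poly_Mapping.keys m)"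
  proof
    fix \<kappa> assume k: "\<kappa> \<in> CS X m"
    have "\<kappa> v \<in> Poly_Mapping.keys m" if "v \<in> fst X" for v
    proof -
      have "card {x\<in>fst X. \<kappa> x = \<kappa> v} \<noteq> 0"
        using that assms by (subst card_0_eq) auto
      then have "Poly_Mapping.lookup m (\<kappa> v) \<noteq> 0" using k unfolding CS_def by simp
      then show ?thesis by (simp add: Poly_Mapping.in_keys_iff)
    qed
    then show "\<kappa> \<in> PiE (fst X) (\<lambda>_. Poly_Mapping.keys m)"
      using k by (auto simp: CS_def proper_coloring_def PiE_iff)
  qed
  moreover have "finite (PiE (fst X) (\<lambda>_. Poly_Mapping.keys m))"
    by (rule finite_PiE) (simp_all only: assms Poly_Mapping.finite_keys)
  ultimately show ?thesis by (rule finite_subset)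
qed

lemma proper_insert:
  assumes "x \<noteq> y"
  shows "proper_coloring (V, insert {x,y} E) \<kappa> \<longleftrightarrow> proper_coloring (V, E) \<kappa> \<and> \<kappa> x \<noteq> \<kappa> y"
  using assms unfolding proper_coloring_def by auto

lemma card_split: "finite S \<Longrightarrow> card S = card {s\<in>S. P s} + card {s\<in>S. \<not> P s}"
  by (subst card_Un_disjoint[symmetric]) (auto intro: arg_cong[where f=card])

lemma triple:
  assumes "finite V" "x \<noteq> y" "x \<noteq> z" "y \<noteq> z"
  shows "csf (V, insert {x,y} (insert {x,z} E)) m - csf (V, insert {x,y} (insert {y,z} E)) m
       = csf (V, insert {x,z} E) m - csf (V, insert {y,z} E) m"
proof -
  define P where "P = CS (V,E) m"
  have fin: "finite P" unfolding P_def using assms by (intro CS_finite) simp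
  have e1: "CS (V, insert {x,y} (insert {x,z} E)) m = {k\<in>P. k x \<noteq> k z \<and> k x \<noteq> k y}"
    using assms by (auto simp: CS_def P_def proper_insert)
  have e2: "CS (V, insert {x,y} (insert {y,z} E)) m = {k\<in>P. k y \<noteq> k z \<and> k x \<noteq> k y}"
    using assms by (auto simp: CS_def P_def proper_insert)
  have e3: "CS (V, insert {x,z} E) m = {k\<in>P. k x \<noteq> k z}"
    using assms by (auto simp: CS_def P_def proper_insert)
  have e4: "CS (V, insert {y,z} E) m = {k\<in>P. k y \<noteq> k z}"
    using assms by (auto simp: CS_def P_def proper_insert)
  have s3: "card {k\<in>P. k x \<noteq> k z} = card {k\<in>P. k x \<noteq> k z \<and> k x \<noteq> k y} + card {k\<in>P. k x \<noteq> k z \<and> k x = k y}"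
  proof -
    have "card {k\<in>P. k x \<noteq> k z} = card {k\<in>{k\<in>P. k x \<noteq> k z}. k x \<noteq> k y} + card {k\<in>{k\<in>P. k x \<noteq> k z}. \<not> k x \<noteq> k y}"
      by (rule card_split) (simp add: fin)
    moreover have "{k\<in>{k\<in>P. k x \<noteq> k z}. k x \<noteq> k y} = {k\<in>P. k x \<noteq> k z \<and> k x \<noteq> k y}" by auto
    moreover have "{k\<in>{k\<in>P. k x \<noteq> k z}. \<not> k x \<noteq> k y} = {k\<in>P. k x \<noteq> k z \<and> k x = k y}" by auto
    ultimately show ?thesis by simp
  qed
  have s4: "card {k\<in>P. k y \<noteq> k z} = card {k\<in>P. k y \<noteq> k z \<and> k x \<noteq> k y} + card {k\<in>P. k y \<noteq> k z \<and> k x = k y}"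
  proof -
    have "card {k\<in>P. k y \<noteq> k z} = card {k\<in>{k\<in>P. k y \<noteq> k z}. k x \<noteq> k y} + card {k\<in>{k\<in>P. k y \<noteq> k z}. \<not> k x \<noteq> k y}"
      by (rule card_split) (simp add: fin)
    moreover have "{k\<in>{k\<in>P. k y \<noteq> k z}. k x \<noteq> k y} = {k\<in>P. k y \<noteq> k z \<and> k x \<noteq> k y}" by auto
    moreover have "{k\<in>{k\<in>P. k y \<noteq> k z}. \<not> k x \<noteq> k y} = {k\<in>P. k y \<noteq> k z \<and> k x = k y}" by auto
    ultimately show ?thesis by simp
  qed
  have "{k\<in>P. k x \<noteq> k z \<and> k x = k y} = {k\<in>P. k y \<noteq> k z \<and> k x = k y}" by auto
  then show ?thesis using s3 s4 by (simp add: csf_CS e1 e2 e3 e4)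
qed




definition img :: "('v \<Rightarrow> 'w) \<Rightarrow> 'v graph \<Rightarrow> 'w graph" where
  "img f X = (f ` fst X, (\<lambda>e. f ` e) ` snd X)"

lemma csf_iso:
  assumes inj: "inj_on \<phi> V" and sub: "\<forall>e\<in>E. e \<subseteq> V"
  shows "csf (img \<phi> (V,E)) m = csf (V,E) m"
proof -
  let ?A = "CS (img \<phi> (V,E)) m"
  let ?B = "CS (V,E) m"
  define T where "T \<kappa> = restrict (\<kappa> \<circ> \<phi>) V" for \<kappa> :: "'b \<Rightarrow> nat"
  define T' where "T' \<kappa> = restrict (\<kappa> \<circ> inv_into V \<phi>) (\<phi> ` V)" for \<kappa> :: "'a \<Rightarrow> nat"
  have cnt1: "card {v\<in>V. \<kappa> (\<phi> v) = c} = card {w\<in>\<phi> ` V. \<kappa> w = c}" for \<kappa> :: "'b \<Rightarrow> nat" and c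
  proof -
    have "card {v\<in>V. \<kappa> (\<phi> v) = c} = card (\<phi> ` {v\<in>V. \<kappa> (\<phi> v) = c})"
      by (rule card_image[symmetric]) (rule inj_on_subset[OF inj], auto)
    also have "\<phi> ` {v\<in>V. \<kappa> (\<phi> v) = c} = {w\<in>\<phi> ` V. \<kappa> w = c}" by auto
    finally show ?thesis .
  qed
  have inv1: "inv_into V \<phi> (\<phi> x) = x" if "x \<in> V" for x using inj that by simp
  have "bij_betw T ?A ?B"
  proof (rule bij_betw_byWitness[where f'=T'])
    show "\<forall>a\<in>?A. T' (T a) = a"
    proof
      fix a assume a: "a \<in> ?A"
      then have ext: "a \<in> \<phi> ` V \<rightarrow>\<^sub>E {1..}" by (simp add: CS_def proper_coloring_def img_def)
      show "T' (T a) = a"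
      proof
        fix y show "T' (T a) y = a y"
        proof (cases "y \<in> \<phi> ` V")
          case True then obtain x where x: "x \<in> V" "y = \<phi> x" by auto
          then show ?thesis by (simp add: T_def T'_def inv1)
        next
          case False then show ?thesis by (simp add: T_def T'_def PiE_arb[OF ext False])
        qed
      qed
    qed
    show "\<forall>b\<in>?B. T (T' b) = b"
    proof
      fix b assume b: "b \<in> ?B"
      then have ext: "b \<in> V \<rightarrow>\<^sub>E {1..}" by (simp add: CS_def proper_coloring_def)
      show "T (T' b) = b"
      proof
        fix y show "T (T' b) y = b y"
        proof (cases "y \<in> V")
          case True then show ?thesis by (simp add: T_def T'_def inv1)
        next
          case False then show ?thesis by (simp add: T_def T'_def PiE_arb[OF ext False])
        qed
      qed
    qed
    show "T ` ?A \<subseteq> ?B"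
    proof
      fix b assume "b \<in> T ` ?A"
      then obtain a where a: "a \<in> ?A" and b: "b = T a" by auto
      have ext: "a \<in> \<phi> ` V \<rightarrow>\<^sub>E {1..}" using a by (simp add: CS_def proper_coloring_def img_def)
      have pr: "\<forall>e\<in>E. \<forall>x\<in>\<phi> ` e. \<forall>y\<in>\<phi> ` e. x \<noteq> y \<longrightarrow> a x \<noteq> a y"
        using a by (simp add: CS_def proper_coloring_def img_def)
      have cn: "\<forall>c. card {w\<in>\<phi> ` V. a w = c} = Poly_Mapping.lookup m c"
        using a by (simp add: CS_def img_def)
      have "b \<in> V \<rightarrow>\<^sub>E {1..}" using ext by (auto simp: b T_def)
      moreover have "\<forall>e\<in>E. \<forall>x\<in>e. \<forall>y\<in>e. x \<noteq> y \<longrightarrow> b x \<noteq> b y"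
      proof (intro ballI impI)
        fix e x y assume "e \<in> E" "x \<in> e" "y \<in> e" "x \<noteq> y"
        moreover have "\<phi> x \<noteq> \<phi> y" using inj sub \<open>e \<in> E\<close> \<open>x \<in> e\<close> \<open>y \<in> e\<close> \<open>x \<noteq> y\<close>
          by (meson inj_onD subsetD)
        ultimately show "b x \<noteq> b y" using pr sub by (auto simp: b T_def)
      qed
      moreover have "card {v\<in>V. b v = c} = Poly_Mapping.lookup m c" for c
      proof -
        have "{v\<in>V. b v = c} = {v\<in>V. a (\<phi> v) = c}" by (auto simp: b T_def)
        then show ?thesis using cnt1 cn by simp
      qed
      ultimately show "b \<in> ?B" by (simp add: CS_def proper_coloring_def)
    qed
    show "T' ` ?B \<subseteq> ?A"
    proof
      fix a assume "a \<in> T' ` ?B"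
      then obtain b where b: "b \<in> ?B" and a: "a = T' b" by auto
      have ext: "b \<in> V \<rightarrow>\<^sub>E {1..}" using b by (simp add: CS_def proper_coloring_def)
      have pr: "\<forall>e\<in>E. \<forall>x\<in>e. \<forall>y\<in>e. x \<noteq> y \<longrightarrow> b x \<noteq> b y"
        using b by (simp add: CS_def proper_coloring_def)
      have cn: "\<forall>c. card {v\<in>V. b v = c} = Poly_Mapping.lookup m c"
        using b by (simp add: CS_def)
      have "a \<in> \<phi> ` V \<rightarrow>\<^sub>E {1..}" using ext by (auto simp: a T'_def inv1)
      moreover have "\<forall>e\<in>E. \<forall>x\<in>\<phi> ` e. \<forall>y\<in>\<phi> ` e. x \<noteq> y \<longrightarrow> a x \<noteq> a y"
      proof (intro ballI impI)
        fix e x y assume e: "e \<in> E" "x \<in> \<phi> ` e" "y \<in> \<phi> ` e" "x \<noteq> y"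
        then obtain x' y' where xy: "x' \<in> e" "y' \<in> e" "x = \<phi> x'" "y = \<phi> y'" by auto
        have V: "x' \<in> V" "y' \<in> V" using xy e sub by auto
        have "x' \<noteq> y'" using xy e by auto
        then have "b x' \<noteq> b y'" using pr e xy by auto
        then show "a x \<noteq> a y" using V xy by (simp add: a T'_def inv1)
      qed
      moreover have "card {w\<in>\<phi> ` V. a w = c} = Poly_Mapping.lookup m c" for c
      proof -
        have "{w\<in>\<phi> ` V. a w = c} = {w\<in>\<phi> ` V. (b \<circ> inv_into V \<phi>) w = c}" by (auto simp: a T'_def)
        also have "card \<dots> = card {v\<in>V. (b \<circ> inv_into V \<phi>) (\<phi> v) = c}" by (rule cnt1[symmetric])
        also have "{v\<in>V. (b \<circ> inv_into V \<phi>) (\<phi> v) = c} = {v\<in>V. b v = c}" by (auto simp: inv1)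
        finally show ?thesis using cn by simp
      qed
      ultimately show "a \<in> ?A" by (simp add: CS_def proper_coloring_def img_def)
    qed
  qed
  then show ?thesis by (simp add: csf_CS bij_betw_same_card)
qed

lemma csf_kernel:
  assumes sub: "\<forall>e\<in>E. e \<subseteq> V" and ker: "\<And>x y. x\<in>V \<Longrightarrow> y\<in>V \<Longrightarrow> f x = f y \<longleftrightarrow> f' x = f' y"
  shows "csf (img f (V,E)) m = csf (img f' (V,E)) m"
proof -
  define \<psi> where "\<psi> y = f' (inv_into V f y)" for y
  have \<psi>f: "\<psi> (f x) = f' x" if "x \<in> V" for x
  proof -
    have "inv_into V f (f x) \<in> V" "f (inv_into V f (f x)) = f x" using that
      by (auto intro: inv_into_into f_inv_into_f)
    then show ?thesis using ker that by (simp add: \<psi>_def)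
  qed
  have inj: "inj_on \<psi> (f ` V)"
    by (rule inj_onI) (auto simp: \<psi>f ker)
  have eq: "img \<psi> (img f (V,E)) = img f' (V,E)"
  proof -
    have "\<psi> ` f ` V = f' ` V" by (auto simp: \<psi>f image_iff)
    moreover have "(\<lambda>e. \<psi> ` e) ` (\<lambda>e. f ` e) ` E = (\<lambda>e. f' ` e) ` E"
    proof -
      have "\<psi> ` f ` e = f' ` e" if "e \<in> E" for e
        using sub that by (force simp: \<psi>f image_iff)
      then show ?thesis by (simp add: image_image cong: image_cong)
    qed
    ultimately show ?thesis by (simp add: img_def)
  qed
  have "csf (img \<psi> (img f (V,E))) m = csf (img f (V,E)) m"
    unfolding img_def[of f] using inj sub by (intro csf_iso) auto
  then show ?thesis using eq by simp
qed

lemma csf_quot: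
  assumes sub: "\<forall>e\<in>E. e \<subseteq> V" and resp: "\<And>a b. (a,b) \<in> R \<Longrightarrow> f a = f b"
    and rep: "\<And>x. x \<in> V \<Longrightarrow> (x, h (f x)) \<in> (R \<union> R\<inverse>)\<^sup>*"
  shows "csf (quot_graph (V,E) R) m = csf (img f (V,E)) m"
proof -
  let ?r = "(R \<union> R\<inverse>)\<^sup>*"
  have q: "quot_graph (V,E) R = img (\<lambda>x. ?r `` {x}) (V,E)"
    by (simp add: quot_graph_def img_def Let_def)
  have symr: "sym ?r" by (simp add: sym_rtrancl sym_Un_converse)
  have fr: "f x = f y" if "(x,y) \<in> ?r" for x y
    using that
  proof (induction rule: rtrancl_induct)
    case base then show ?case by simp
  next
    case (step y z) then show ?case using resp by auto
  qed
  have cls: "?r `` {x} = ?r `` {y}" if "(x,y) \<in> ?r" for x y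
  proof -
    have "(y,x) \<in> ?r" using symr that by (meson symD)
    then show ?thesis using that by (blast intro: rtrancl_trans)
  qed
  have ker: "?r `` {x} = ?r `` {y} \<longleftrightarrow> f x = f y" if "x \<in> V" "y \<in> V" for x y
  proof
    assume "?r `` {x} = ?r `` {y}"
    then have "(x,y) \<in> ?r" by blast
    then show "f x = f y" by (rule fr)
  next
    assume "f x = f y"
    have "(x, h (f x)) \<in> ?r" "(y, h (f y)) \<in> ?r" using rep that by auto
    then have "(h (f y), y) \<in> ?r" "(x, h (f y)) \<in> ?r" using symr \<open>f x = f y\<close> by (auto dest: symD)
    then have "(x,y) \<in> ?r" by (blast intro: rtrancl_trans)
    then show "?r `` {x} = ?r `` {y}" by (rule cls)
  qed
  show ?thesis unfolding q by (rule csf_kernel[OF sub ker]) auto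
qed




lemma pairs_finite:
  fixes m :: "nat \<Rightarrow>\<^sub>0 nat"
  shows "finite {p::(nat \<Rightarrow>\<^sub>0 nat) \<times> (nat \<Rightarrow>\<^sub>0 nat). fst p + snd p = m}" (is "finite ?P")
proof -
  define M where "M = sum (Poly_Mapping.lookup m) (Poly_Mapping.keys m)"
  define F where "F = {f::nat\<Rightarrow>nat. \<forall>x. (x \<in> Poly_Mapping.keys m \<longrightarrow> f x \<in> {..M}) \<and> (x \<notin> Poly_Mapping.keys m \<longrightarrow> f x = 0)}"
  have fF: "finite F" unfolding F_def by (rule finite_set_of_finite_funs) simp_all
  have inj: "inj_on (\<lambda>p. Poly_Mapping.lookup (fst p)) ?P"
  proof (rule inj_onI)
    fix p q assume p: "p \<in> ?P" and q: "q \<in> ?P" and eq: "Poly_Mapping.lookup (fst p) = Poly_Mapping.lookup (fst q)"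
    from eq have f: "fst p = fst q" by simp
    have "fst p + snd p = m" using p by simp
    then have "snd p = m - fst p" by (metis add_diff_cancel_left')
    moreover have "fst q + snd q = m" using q by simp
    then have "snd q = m - fst q" by (metis add_diff_cancel_left')
    ultimately show "p = q" using f by (simp add: prod_eq_iff)
  qed
  have "(\<lambda>p. Poly_Mapping.lookup (fst p)) ` ?P \<subseteq> F"
  proof
    fix f assume "f \<in> (\<lambda>p. Poly_Mapping.lookup (fst p)) ` ?P"
    then obtain p where p: "fst p + snd p = m" and f: "f = Poly_Mapping.lookup (fst p)" by auto
    have le: "f x \<le> Poly_Mapping.lookup m x" for x
      using p f by (auto simp: lookup_add)
    show "f \<in> F" unfolding F_def
    proof (intro CollectI allI conjI impI)
      fix x assume "x \<in> Poly_Mapping.keys m"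
      then have "Poly_Mapping.lookup m x \<le> M" unfolding M_def
        by (intro member_le_sum) simp_all
      then show "f x \<in> {..M}" using le[of x] by simp
    next
      fix x assume "x \<notin> Poly_Mapping.keys m"
      then have "Poly_Mapping.lookup m x = 0" by (simp add: Poly_Mapping.in_keys_iff)
      then show "f x = 0" using le[of x] by simp
    qed
  qed
  then have "finite ((\<lambda>p. Poly_Mapping.lookup (fst p)) ` ?P)" using fF by (rule finite_subset)
  then show ?thesis using inj by (rule finite_imageD)
qed

definition cntp :: "'v set \<Rightarrow> ('v \<Rightarrow> nat) \<Rightarrow> nat \<Rightarrow>\<^sub>0 nat" where
  "cntp V \<kappa> = Abs_poly_mapping (\<lambda>c. card {v\<in>V. \<kappa> v = c})"

lemma lookup_cntp: "finite V \<Longrightarrow> Poly_Mapping.lookup (cntp V \<kappa>) c = card {v\<in>V. \<kappa> v = c}"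
proof -
  assume fV: "finite V"
  have "{c. card {v\<in>V. \<kappa> v = c} \<noteq> 0} \<subseteq> \<kappa> ` V"
    using fV by auto
  then have "finite {c. card {v\<in>V. \<kappa> v = c} \<noteq> 0}" using fV by (meson finite_imageI finite_subset)
  then show ?thesis by (simp add: cntp_def)
qed

lemma csf_union:
  assumes fA: "finite VA" and fB: "finite VB" and dis: "VA \<inter> VB = {}"
    and eA: "\<forall>e\<in>EA. e \<subseteq> VA" and eB: "\<forall>e\<in>EB. e \<subseteq> VB"
  shows "sf_times (csf (VA,EA)) (csf (VB,EB)) m = csf (VA \<union> VB, EA \<union> EB) m"
proof -
  define Pr where "Pr = {p::(nat \<Rightarrow>\<^sub>0 nat) \<times> (nat \<Rightarrow>\<^sub>0 nat). fst p + snd p = m}"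
  have finPr: "finite Pr" unfolding Pr_def by (rule pairs_finite)
  let ?U = "\<Union>p\<in>Pr. CS (VA,EA) (fst p) \<times> CS (VB,EB) (snd p)"
  have s1: "sf_times (csf (VA,EA)) (csf (VB,EB)) m = (\<Sum>p\<in>Pr. int (card (CS (VA,EA) (fst p) \<times> CS (VB,EB) (snd p))))"
    by (simp add: sf_times_def Pr_def csf_CS card_cartesian_product)
  have s2: "(\<Sum>p\<in>Pr. int (card (CS (VA,EA) (fst p) \<times> CS (VB,EB) (snd p)))) = int (\<Sum>p\<in>Pr. card (CS (VA,EA) (fst p) \<times> CS (VB,EB) (snd p)))"
    by simp
  have s3: "(\<Sum>p\<in>Pr. card (CS (VA,EA) (fst p) \<times> CS (VB,EB) (snd p))) = card ?U"
  proof (rule card_UN_disjoint[symmetric])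
    show "finite Pr" by (rule finPr)
    show "\<forall>p\<in>Pr. finite (CS (VA,EA) (fst p) \<times> CS (VB,EB) (snd p))"
      using fA fB by (auto intro!: finite_cartesian_product CS_finite)
    show "\<forall>p\<in>Pr. \<forall>q\<in>Pr. p \<noteq> q \<longrightarrow> (CS (VA,EA) (fst p) \<times> CS (VB,EB) (snd p)) \<inter> (CS (VA,EA) (fst q) \<times> CS (VB,EB) (snd q)) = {}"
    proof (intro ballI impI)
      fix p q assume "p \<in> Pr" "q \<in> Pr" "p \<noteq> q"
      show "(CS (VA,EA) (fst p) \<times> CS (VB,EB) (snd p)) \<inter> (CS (VA,EA) (fst q) \<times> CS (VB,EB) (snd q)) = {}"
      proof (rule ccontr)
        assume "\<not> ?thesis"
        then obtain a b where "a \<in> CS (VA,EA) (fst p)" "a \<in> CS (VA,EA) (fst q)"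
          "b \<in> CS (VB,EB) (snd p)" "b \<in> CS (VB,EB) (snd q)" by auto
        then have "Poly_Mapping.lookup (fst p) c = Poly_Mapping.lookup (fst q) c"
          "Poly_Mapping.lookup (snd p) c = Poly_Mapping.lookup (snd q) c" for c
          by (auto simp: CS_def)
        then have "fst p = fst q" "snd p = snd q" by (auto intro: poly_mapping_eqI)
        then show False using \<open>p \<noteq> q\<close> by (simp add: prod_eq_iff)
      qed
    qed
  qed
  have s4: "card ?U = card (CS (VA \<union> VB, EA \<union> EB) m)"
  proof -
    define F where "F \<kappa> = (restrict \<kappa> VA, restrict \<kappa> VB)" for \<kappa> :: "'a \<Rightarrow> nat"
    define F' where "F' ab = (\<lambda>x. if x \<in> VA then fst ab x else snd ab x)" for ab :: "('a \<Rightarrow> nat) \<times> ('a \<Rightarrow> nat)"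
    have "bij_betw F (CS (VA \<union> VB, EA \<union> EB) m) ?U"
    proof (rule bij_betw_byWitness[where f'=F'])
      show "\<forall>k\<in>CS (VA \<union> VB, EA \<union> EB) m. F' (F k) = k"
      proof
        fix k assume "k \<in> CS (VA \<union> VB, EA \<union> EB) m"
        then have ext: "k \<in> VA \<union> VB \<rightarrow>\<^sub>E {1..}" by (simp add: CS_def proper_coloring_def)
        show "F' (F k) = k"
        proof
          fix x show "F' (F k) x = k x"
          proof (cases "x \<in> VA \<union> VB")
            case True then show ?thesis by (auto simp: F_def F'_def)
          next
            case False then show ?thesis by (simp add: F_def F'_def PiE_arb[OF ext False])
          qed
        qed
      qed
      show "\<forall>ab\<in>?U. F (F' ab) = ab"
      proof
        fix ab assume "ab \<in> ?U"
        then obtain a b where ab: "ab = (a,b)" and a: "a \<in> VA \<rightarrow>\<^sub>E {1..}" and b: "b \<in> VB \<rightarrow>\<^sub>E {1..}"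
          by (auto simp: CS_def proper_coloring_def)
        have "restrict (F' ab) VA = a"
        proof
          fix x show "restrict (F' ab) VA x = a x"
            by (cases "x \<in> VA") (simp_all add: F'_def ab PiE_arb[OF a])
        qed
        moreover have "restrict (F' ab) VB = b"
        proof
          fix x show "restrict (F' ab) VB x = b x"
            using dis by (cases "x \<in> VB") (auto simp add: F'_def ab PiE_arb[OF b])
        qed
        ultimately show "F (F' ab) = ab" by (simp add: F_def ab)
      qed
      show "F ` CS (VA \<union> VB, EA \<union> EB) m \<subseteq> ?U"
      proof
        fix y assume "y \<in> F ` CS (VA \<union> VB, EA \<union> EB) m"
        then obtain k where k: "k \<in> CS (VA \<union> VB, EA \<union> EB) m" and y: "y = F k" by auto
        have ext: "k \<in> VA \<union> VB \<rightarrow>\<^sub>E {1..}" using k by (simp add: CS_def proper_coloring_def)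
        have pr: "\<forall>e\<in>EA \<union> EB. \<forall>x\<in>e. \<forall>y\<in>e. x \<noteq> y \<longrightarrow> k x \<noteq> k y"
          using k by (simp add: CS_def proper_coloring_def)
        have cn: "card {v\<in>VA \<union> VB. k v = c} = Poly_Mapping.lookup m c" for c
          using k by (simp add: CS_def)
        have split: "card {v\<in>VA \<union> VB. k v = c} = card {v\<in>VA. k v = c} + card {v\<in>VB. k v = c}" for c
        proof -
          have "{v\<in>VA \<union> VB. k v = c} = {v\<in>VA. k v = c} \<union> {v\<in>VB. k v = c}" by auto
          moreover have "{v\<in>VA. k v = c} \<inter> {v\<in>VB. k v = c} = {}" using dis by auto
          moreover have "finite {v\<in>VA. k v = c}" "finite {v\<in>VB. k v = c}" using fA fB by auto
          ultimately show ?thesis by (simp only: card_Un_disjoint)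
        qed
        let ?p = "(cntp VA k, cntp VB k)"
        have "cntp VA k + cntp VB k = m"
        proof (rule poly_mapping_eqI)
          fix c show "Poly_Mapping.lookup (cntp VA k + cntp VB k) c = Poly_Mapping.lookup m c"
            by (simp only: lookup_add lookup_cntp[OF fA] lookup_cntp[OF fB] split[symmetric] cn)
        qed
        then have "?p \<in> Pr" unfolding Pr_def by simp
        moreover have "restrict k VA \<in> CS (VA,EA) (cntp VA k)"
        proof -
          have "restrict k VA \<in> VA \<rightarrow>\<^sub>E {1..}" using PiE_mem[OF ext] by (simp add: restrict_PiE_iff)
          moreover have "\<forall>e\<in>EA. \<forall>x\<in>e. \<forall>y\<in>e. x \<noteq> y \<longrightarrow> restrict k VA x \<noteq> restrict k VA y"
          proof (intro ballI impI)
            fix e x y assume h: "e \<in> EA" "x \<in> e" "y \<in> e" "x \<noteq> y"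
            then have "x \<in> VA" "y \<in> VA" using eA by auto
            moreover have "k x \<noteq> k y" using pr h by blast
            ultimately show "restrict k VA x \<noteq> restrict k VA y" by simp
          qed
          moreover have "card {v\<in>VA. restrict k VA v = c} = Poly_Mapping.lookup (cntp VA k) c" for c
          proof -
            have "{v\<in>VA. restrict k VA v = c} = {v\<in>VA. k v = c}" by auto
            then show ?thesis by (simp add: lookup_cntp fA)
          qed
          ultimately show ?thesis by (simp add: CS_def proper_coloring_def)
        qed
        moreover have "restrict k VB \<in> CS (VB,EB) (cntp VB k)"
        proof -
          have "restrict k VB \<in> VB \<rightarrow>\<^sub>E {1..}" using PiE_mem[OF ext] by (simp add: restrict_PiE_iff)
          moreover have "\<forall>e\<in>EB. \<forall>x\<in>e. \<forall>y\<in>e. x \<noteq> y \<longrightarrow> restrict k VB x \<noteq> restrict k VB y"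
          proof (intro ballI impI)
            fix e x y assume h: "e \<in> EB" "x \<in> e" "y \<in> e" "x \<noteq> y"
            then have "x \<in> VB" "y \<in> VB" using eB by auto
            moreover have "k x \<noteq> k y" using pr h by blast
            ultimately show "restrict k VB x \<noteq> restrict k VB y" by simp
          qed
          moreover have "card {v\<in>VB. restrict k VB v = c} = Poly_Mapping.lookup (cntp VB k) c" for c
          proof -
            have "{v\<in>VB. restrict k VB v = c} = {v\<in>VB. k v = c}" by auto
            then show ?thesis by (simp add: lookup_cntp fB)
          qed
          ultimately show ?thesis by (simp add: CS_def proper_coloring_def)
        qed
        ultimately show "y \<in> ?U" unfolding y F_def by (intro UN_I[where a="?p"]) simp_all
      qed
      show "F' ` ?U \<subseteq> CS (VA \<union> VB, EA \<union> EB) m"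
      proof
        fix k assume "k \<in> F' ` ?U"
        then obtain a b p where p: "p \<in> Pr" and a: "a \<in> CS (VA,EA) (fst p)" and b: "b \<in> CS (VB,EB) (snd p)"
          and k: "k = F' (a,b)" by auto
        have ea: "a \<in> VA \<rightarrow>\<^sub>E {1..}" and eb: "b \<in> VB \<rightarrow>\<^sub>E {1..}" using a b by (simp_all add: CS_def proper_coloring_def)
        have pa: "\<forall>e\<in>EA. \<forall>x\<in>e. \<forall>y\<in>e. x \<noteq> y \<longrightarrow> a x \<noteq> a y" using a by (simp add: CS_def proper_coloring_def)
        have pb: "\<forall>e\<in>EB. \<forall>x\<in>e. \<forall>y\<in>e. x \<noteq> y \<longrightarrow> b x \<noteq> b y" using b by (simp add: CS_def proper_coloring_def)
        have ca: "card {v\<in>VA. a v = c} = Poly_Mapping.lookup (fst p) c" for c using a by (simp add: CS_def)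
        have cb: "card {v\<in>VB. b v = c} = Poly_Mapping.lookup (snd p) c" for c using b by (simp add: CS_def)
        have kA: "k x = a x" if "x \<in> VA" for x using that by (simp add: k F'_def)
        have kB: "k x = b x" if "x \<in> VB" for x using that dis by (auto simp: k F'_def)
        have "k \<in> VA \<union> VB \<rightarrow>\<^sub>E {1..}"
        proof (rule PiE_I)
          fix x assume "x \<in> VA \<union> VB" then show "k x \<in> {1..}"
            using PiE_mem[OF ea] PiE_mem[OF eb] kA kB by auto
        next
          fix x assume "x \<notin> VA \<union> VB" then show "k x = undefined"
            by (simp add: k F'_def PiE_arb[OF eb])
        qed
        moreover have "\<forall>e\<in>EA \<union> EB. \<forall>x\<in>e. \<forall>y\<in>e. x \<noteq> y \<longrightarrow> k x \<noteq> k y"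
        proof (intro ballI impI)
          fix e x y assume "e \<in> EA \<union> EB" "x \<in> e" "y \<in> e" "x \<noteq> y"
          then show "k x \<noteq> k y"
          proof (cases "e \<in> EA")
            case True then show ?thesis using eA pa kA \<open>x \<in> e\<close> \<open>y \<in> e\<close> \<open>x \<noteq> y\<close> by (metis subsetD)
          next
            case False then have "e \<in> EB" using \<open>e \<in> EA \<union> EB\<close> by simp
            then show ?thesis using eB pb kB \<open>x \<in> e\<close> \<open>y \<in> e\<close> \<open>x \<noteq> y\<close> by (metis subsetD)
          qed
        qed
        moreover have "card {v\<in>VA \<union> VB. k v = c} = Poly_Mapping.lookup m c" for c
        proof -
          have "{v\<in>VA \<union> VB. k v = c} = {v\<in>VA. a v = c} \<union> {v\<in>VB. b v = c}" using kA kB by auto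
          moreover have "{v\<in>VA. a v = c} \<inter> {v\<in>VB. b v = c} = {}" using dis by auto
          ultimately have "card {v\<in>VA \<union> VB. k v = c} = card {v\<in>VA. a v = c} + card {v\<in>VB. b v = c}"
            using fA fB by (simp add: card_Un_disjoint)
          also have "\<dots> = Poly_Mapping.lookup (fst p + snd p) c" by (simp add: ca cb lookup_add)
          finally show ?thesis using p by (simp add: Pr_def)
        qed
        ultimately show "k \<in> CS (VA \<union> VB, EA \<union> EB) m" by (simp add: CS_def proper_coloring_def)
      qed
    qed
    then show ?thesis by (simp add: bij_betw_same_card)
  qed
  have eq: "sf_times (csf (VA,EA)) (csf (VB,EB)) m = int (card (CS (VA \<union> VB, EA \<union> EB) m))"
    using s1 s2 s3 s4 by simp
  show ?thesis by (subst csf_CS[of "(VA \<union> VB, EA \<union> EB)"]) (rule eq)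
qed




definition pathE :: "(nat \<Rightarrow> 'v) \<Rightarrow> nat \<Rightarrow> 'v set set" where
  "pathE \<phi> n = {{\<phi> k, \<phi> (Suc k)} | k. k < n}"
definition pathV :: "(nat \<Rightarrow> 'v) \<Rightarrow> nat \<Rightarrow> 'v set" where
  "pathV \<phi> n = \<phi> ` {..n}"

lemma pathE_cong:
  assumes "\<And>k. k \<le> n \<Longrightarrow> \<phi> k = \<psi> k" shows "pathE \<phi> n = pathE \<psi> n"
proof -
  have *: "{\<phi> k, \<phi> (Suc k)} = {\<psi> k, \<psi> (Suc k)}" if "k < n" for k
    using assms[of k] assms[of "Suc k"] that by simp
  show ?thesis
  proof
    show "pathE \<phi> n \<subseteq> pathE \<psi> n"
    proof
      fix e assume "e \<in> pathE \<phi> n"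
      then obtain k where "k < n" "e = {\<phi> k, \<phi> (Suc k)}" unfolding pathE_def by blast
      then show "e \<in> pathE \<psi> n" using * unfolding pathE_def by blast
    qed
    show "pathE \<psi> n \<subseteq> pathE \<phi> n"
    proof
      fix e assume "e \<in> pathE \<psi> n"
      then obtain k where "k < n" "e = {\<psi> k, \<psi> (Suc k)}" unfolding pathE_def by blast
      then show "e \<in> pathE \<phi> n" using * unfolding pathE_def by blast
    qed
  qed
qed

lemma pathV_cong: "(\<And>k. k \<le> n \<Longrightarrow> \<phi> k = \<psi> k) \<Longrightarrow> pathV \<phi> n = pathV \<psi> n"
  unfolding pathV_def by (auto simp: image_iff)

lemma pathE_rev: "pathE (\<lambda>k. \<phi> (n - k)) n = pathE \<phi> n"
proof -
  have 1: "{\<phi> (n - k), \<phi> (n - Suc k)} \<in> pathE \<phi> n" if "k < n" for k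
  proof -
    have e: "Suc (n - Suc k) = n - k" "n - Suc k < n" using that by auto
    show ?thesis unfolding pathE_def
      by (rule CollectI, rule exI[where x="n - Suc k"]) (simp add: e insert_commute)
  qed
  have 2: "{\<phi> k, \<phi> (Suc k)} \<in> pathE (\<lambda>k. \<phi> (n - k)) n" if "k < n" for k
  proof -
    have e: "n - (n - Suc k) = Suc k" "n - Suc (n - Suc k) = k" "n - Suc k < n" using that by auto
    show ?thesis unfolding pathE_def
      by (rule CollectI, rule exI[where x="n - Suc k"]) (simp add: e insert_commute)
  qed
  show ?thesis
  proof
    show "pathE (\<lambda>k. \<phi> (n - k)) n \<subseteq> pathE \<phi> n"
    proof
      fix e assume "e \<in> pathE (\<lambda>k. \<phi> (n - k)) n"
      then obtain k where "k < n" "e = {\<phi> (n - k), \<phi> (n - Suc k)}" unfolding pathE_def by blast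
      then show "e \<in> pathE \<phi> n" using 1 by blast
    qed
    show "pathE \<phi> n \<subseteq> pathE (\<lambda>k. \<phi> (n - k)) n"
    proof
      fix e assume "e \<in> pathE \<phi> n"
      then obtain k where "k < n" "e = {\<phi> k, \<phi> (Suc k)}" unfolding pathE_def by blast
      then show "e \<in> pathE (\<lambda>k. \<phi> (n - k)) n" using 2 by blast
    qed
  qed
qed

lemma pathV_rev: "pathV (\<lambda>k. \<phi> (n - k)) n = pathV \<phi> n"
proof -
  have "(\<lambda>k. \<phi> (n - k)) ` {..n} = \<phi> ` ((\<lambda>k. n - k) ` {..n})" by (simp add: image_image)
  also have "(\<lambda>k. n - k) ` {..n} = {..n}"
  proof
    show "(\<lambda>k. n - k) ` {..n} \<subseteq> {..n}" by auto
    show "{..n} \<subseteq> (\<lambda>k. n - k) ` {..n}"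
    proof
      fix x assume "x \<in> {..n}" then have "x = n - (n - x)" "n - x \<in> {..n}" by auto
      then show "x \<in> (\<lambda>k. n - k) ` {..n}" by blast
    qed
  qed
  finally show ?thesis by (simp add: pathV_def)
qed

lemma pathE_add: "pathE \<phi> (n + m) = pathE \<phi> n \<union> pathE (\<lambda>k. \<phi> (n + k)) m"
proof
  show "pathE \<phi> (n + m) \<subseteq> pathE \<phi> n \<union> pathE (\<lambda>k. \<phi> (n + k)) m"
  proof
    fix e assume "e \<in> pathE \<phi> (n + m)"
    then obtain k where k: "k < n + m" "e = {\<phi> k, \<phi> (Suc k)}" by (auto simp: pathE_def)
    show "e \<in> pathE \<phi> n \<union> pathE (\<lambda>k. \<phi> (n + k)) m"
    proof (cases "k < n")
      case True then show ?thesis using k by (auto simp: pathE_def)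
    next
      case False
      then have "k - n < m" "e = {\<phi> (n + (k - n)), \<phi> (n + Suc (k - n))}" using k by auto
      then have "e \<in> pathE (\<lambda>k. \<phi> (n + k)) m" unfolding pathE_def by blast
      then show ?thesis by simp
    qed
  qed
  show "pathE \<phi> n \<union> pathE (\<lambda>k. \<phi> (n + k)) m \<subseteq> pathE \<phi> (n + m)"
  proof
    fix e assume "e \<in> pathE \<phi> n \<union> pathE (\<lambda>k. \<phi> (n + k)) m"
    then show "e \<in> pathE \<phi> (n + m)"
    proof
      assume "e \<in> pathE \<phi> n" then show ?thesis by (auto simp: pathE_def)
    next
      assume "e \<in> pathE (\<lambda>k. \<phi> (n + k)) m"
      then obtain k where k: "k < m" "e = {\<phi> (n + k), \<phi> (n + Suc k)}" by (auto simp: pathE_def)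
      then have "n + k < n + m" "e = {\<phi> (n + k), \<phi> (Suc (n + k))}" by auto
      then show ?thesis unfolding pathE_def by blast
    qed
  qed
qed

lemma pathV_add: "pathV \<phi> (n + m) = pathV \<phi> n \<union> pathV (\<lambda>k. \<phi> (n + k)) m"
proof
  show "pathV \<phi> (n + m) \<subseteq> pathV \<phi> n \<union> pathV (\<lambda>k. \<phi> (n + k)) m"
  proof
    fix x assume "x \<in> pathV \<phi> (n + m)"
    then obtain k where k: "k \<le> n + m" "x = \<phi> k" by (auto simp: pathV_def)
    show "x \<in> pathV \<phi> n \<union> pathV (\<lambda>k. \<phi> (n + k)) m"
    proof (cases "k \<le> n")
      case True then show ?thesis using k by (auto simp: pathV_def)
    next
      case False
      then have "k - n \<le> m" "x = \<phi> (n + (k - n))" using k by auto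
      then have "x \<in> pathV (\<lambda>k. \<phi> (n + k)) m" unfolding pathV_def by blast
      then show ?thesis by simp
    qed
  qed
  show "pathV \<phi> n \<union> pathV (\<lambda>k. \<phi> (n + k)) m \<subseteq> pathV \<phi> (n + m)"
    by (auto simp: pathV_def)
qed

lemma pathE_0[simp]: "pathE \<phi> 0 = {}" by (simp add: pathE_def)
lemma pathV_0[simp]: "pathV \<phi> 0 = {\<phi> 0}" by (simp add: pathV_def)

lemma pathE_Suc0: "pathE \<phi> (Suc n) = insert {\<phi> 0, \<phi> 1} (pathE (\<lambda>k. \<phi> (Suc k)) n)"
proof -
  have "pathE \<phi> (1 + n) = pathE \<phi> 1 \<union> pathE (\<lambda>k. \<phi> (1 + k)) n" by (rule pathE_add)
  moreover have "pathE \<phi> 1 = {{\<phi> 0, \<phi> 1}}" by (simp add: pathE_def)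
  ultimately show ?thesis by simp
qed

lemma pathV_Suc0: "pathV \<phi> (Suc n) = insert (\<phi> 0) (pathV (\<lambda>k. \<phi> (Suc k)) n)"
proof -
  have "pathV \<phi> (1 + n) = pathV \<phi> 1 \<union> pathV (\<lambda>k. \<phi> (1 + k)) n" by (rule pathV_add)
  moreover have "pathV \<phi> 1 = {\<phi> 0, \<phi> 1}" by (auto simp: pathV_def le_Suc_eq)
  moreover have "\<phi> 1 \<in> pathV (\<lambda>k. \<phi> (Suc k)) n" by (auto simp: pathV_def)
  ultimately show ?thesis by auto
qed

lemma pathE_img: "(\<lambda>e. f ` e) ` pathE \<phi> n = pathE (\<lambda>k. f (\<phi> k)) n"
proof
  show "(\<lambda>e. f ` e) ` pathE \<phi> n \<subseteq> pathE (\<lambda>k. f (\<phi> k)) n" unfolding pathE_def by auto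
  show "pathE (\<lambda>k. f (\<phi> k)) n \<subseteq> (\<lambda>e. f ` e) ` pathE \<phi> n"
  proof
    fix e assume "e \<in> pathE (\<lambda>k. f (\<phi> k)) n"
    then obtain k where k: "k < n" "e = {f (\<phi> k), f (\<phi> (Suc k))}" unfolding pathE_def by blast
    then have "e = f ` {\<phi> k, \<phi> (Suc k)}" by simp
    moreover have "{\<phi> k, \<phi> (Suc k)} \<in> pathE \<phi> n" using k unfolding pathE_def by blast
    ultimately show "e \<in> (\<lambda>e. f ` e) ` pathE \<phi> n" by blast
  qed
qed

lemma pathV_img: "f ` pathV \<phi> n = pathV (\<lambda>k. f (\<phi> k)) n"
  unfolding pathV_def by auto

lemma pathE_sub: "e \<in> pathE \<phi> n \<Longrightarrow> e \<subseteq> pathV \<phi> n"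
  unfolding pathE_def pathV_def by auto

lemma pathV_finite[simp]: "finite (pathV \<phi> n)"
  unfolding pathV_def by simp

lemma S_pre: "S_graph t1 t2 t3 G u H v J w = quot_graph
     ((Inl \<circ> Inl) ` fst G \<union> (Inl \<circ> Inr \<circ> Inl) ` fst H \<union> (Inl \<circ> Inr \<circ> Inr) ` fst J
        \<union> pathV (\<lambda>s. Inr (1,s)) t1 \<union> pathV (\<lambda>s. Inr (2,s)) t2 \<union> pathV (\<lambda>s. Inr (3,s)) t3,
      (\<lambda>e. (Inl \<circ> Inl) ` e) ` snd G \<union> (\<lambda>e. (Inl \<circ> Inr \<circ> Inl) ` e) ` snd H
        \<union> (\<lambda>e. (Inl \<circ> Inr \<circ> Inr) ` e) ` snd J
        \<union> pathE (\<lambda>s. Inr (1,s)) t1 \<union> pathE (\<lambda>s. Inr (2,s)) t2 \<union> pathE (\<lambda>s. Inr (3,s)) t3)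
     {(Inr (2, 0), Inr (1, 0)), (Inr (3, 0), Inr (1, 0)),
      (Inr (1, t1), Inl (Inl u)), (Inr (2, t2), Inl (Inr (Inl v))), (Inr (3, t3), Inl (Inr (Inr w)))}"
proof -
  have X: "Inr ` ({(1, s) | s. s \<le> t1} \<union> {(2, s) | s. s \<le> t2} \<union> {(3, s) | s. s \<le> t3})
     = pathV (\<lambda>s. Inr (1,s)) t1 \<union> pathV (\<lambda>s. Inr (2,s)) t2 \<union> pathV (\<lambda>s. Inr (3,s)) t3"
    unfolding pathV_def by auto
  have Y: "{{Inr (i, s), Inr (i, Suc s)} | s. s < t} = pathE (\<lambda>s. Inr (i,s)) t" for i t
    unfolding pathE_def by simp
  show ?thesis unfolding S_graph_def X Y by (simp only: Un_assoc)
qed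

lemma P_pre: "Pk_graph k G u H v = quot_graph
     ((Inl \<circ> Inl) ` fst G \<union> (Inl \<circ> Inr) ` fst H \<union> pathV Inr k,
      (\<lambda>e. (Inl \<circ> Inl) ` e) ` snd G \<union> (\<lambda>e. (Inl \<circ> Inr) ` e) ` snd H \<union> pathE Inr k)
     {(Inr 0, Inl (Inl u)), (Inr k, Inl (Inr v))}"
  unfolding Pk_graph_def pathV_def pathE_def by (simp add: atLeast0AtMost)




lemma rt_f: "(p,q) \<in> R \<Longrightarrow> (p,q) \<in> (R \<union> R\<inverse>)\<^sup>*" by auto
lemma rt_b: "(p,q) \<in> R \<Longrightarrow> (q,p) \<in> (R \<union> R\<inverse>)\<^sup>*" by auto

locale spider =
  fixes G :: "'a graph" and u :: 'a and H :: "'b graph" and v :: 'b and J :: "'c graph" and w :: 'c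
  assumes wfG: "wf_graph G" and uG: "u \<in> fst G" and wfH: "wf_graph H" and vH: "v \<in> fst H"
    and wfJ: "wf_graph J" and wJ: "w \<in> fst J"
begin

lemma subG: "e \<in> snd G \<Longrightarrow> e \<subseteq> fst G" using wfG by (simp add: wf_graph_def)
lemma subH: "e \<in> snd H \<Longrightarrow> e \<subseteq> fst H" using wfH by (simp add: wf_graph_def)
lemma subJ: "e \<in> snd J \<Longrightarrow> e \<subseteq> fst J" using wfJ by (simp add: wf_graph_def)
lemma finG: "finite (fst G)" using wfG by (simp add: wf_graph_def)
lemma finH: "finite (fst H)" using wfH by (simp add: wf_graph_def)
lemma finJ: "finite (fst J)" using wfJ by (simp add: wf_graph_def)

definition gs :: "nat \<Rightarrow> nat \<Rightarrow> ('a + 'b + 'c) + nat \<times> nat" where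
  "gs n k = (if k = n then Inl (Inl u) else Inr (1,k))"
definition hs :: "nat \<Rightarrow> nat \<Rightarrow> ('a + 'b + 'c) + nat \<times> nat" where
  "hs n k = (if k = n then Inl (Inr (Inl v)) else Inr (2,k))"
definition js :: "nat \<Rightarrow> nat \<Rightarrow> ('a + 'b + 'c) + nat \<times> nat" where
  "js n k = (if k = n then Inl (Inr (Inr w)) else Inr (3,k))"

definition V0 :: "nat \<Rightarrow> nat \<Rightarrow> nat \<Rightarrow> (('a + 'b + 'c) + nat \<times> nat) set" where
  "V0 a hh jj = (Inl \<circ> Inl) ` fst G \<union> (Inl \<circ> Inr \<circ> Inl) ` fst H \<union> (Inl \<circ> Inr \<circ> Inr) ` fst J
     \<union> pathV (gs a) a \<union> pathV (hs hh) hh \<union> pathV (js jj) jj"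
definition E0 :: "nat \<Rightarrow> nat \<Rightarrow> nat \<Rightarrow> (('a + 'b + 'c) + nat \<times> nat) set set" where
  "E0 a hh jj = (\<lambda>e. (Inl \<circ> Inl) ` e) ` snd G \<union> (\<lambda>e. (Inl \<circ> Inr \<circ> Inl) ` e) ` snd H
     \<union> (\<lambda>e. (Inl \<circ> Inr \<circ> Inr) ` e) ` snd J
     \<union> pathE (gs a) a \<union> pathE (hs hh) hh \<union> pathE (js jj) jj"

lemma gs0_in: "gs a 0 \<in> pathV (gs a) a" by (auto simp: pathV_def)
lemma js0_in: "js a 0 \<in> pathV (js a) a" by (auto simp: pathV_def)
lemma hs0_in: "hs a 0 \<in> pathV (hs a) a" by (auto simp: pathV_def)

lemma S1:
  "csf (S_graph a (Suc hh) (Suc jj) G u H v J w) m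
   = csf (V0 a hh jj, insert {gs a 0, js jj 0} (insert {gs a 0, hs hh 0} (E0 a hh jj))) m"
proof -
  define f where "f x = (case x of Inl y \<Rightarrow> Inl y | Inr (i,s) \<Rightarrow>
     if i = 1 then gs a s else if s = 0 then gs a 0 else if i = 2 then hs hh (s-1) else js jj (s-1))"
    for x :: "('a + 'b + 'c) + nat \<times> nat"
  define r where "r y = (case y of Inl z \<Rightarrow> Inl z | Inr (i,k) \<Rightarrow> if i = 1 then Inr (1,k) else Inr (i, Suc k))"
    for y :: "('a + 'b + 'c) + nat \<times> nat"
  let ?V = "(Inl \<circ> Inl) ` fst G \<union> (Inl \<circ> Inr \<circ> Inl) ` fst H \<union> (Inl \<circ> Inr \<circ> Inr) ` fst J
        \<union> pathV (\<lambda>s. Inr (1,s)) a \<union> pathV (\<lambda>s. Inr (2,s)) (Suc hh) \<union> pathV (\<lambda>s. Inr (3,s)) (Suc jj)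
        :: (('a + 'b + 'c) + nat \<times> nat) set"
  let ?E = "(\<lambda>e. (Inl \<circ> Inl) ` e) ` snd G \<union> (\<lambda>e. (Inl \<circ> Inr \<circ> Inl) ` e) ` snd H
        \<union> (\<lambda>e. (Inl \<circ> Inr \<circ> Inr) ` e) ` snd J
        \<union> pathE (\<lambda>s. Inr (1,s)) a \<union> pathE (\<lambda>s. Inr (2,s)) (Suc hh) \<union> pathE (\<lambda>s. Inr (3,s)) (Suc jj)
        :: (('a + 'b + 'c) + nat \<times> nat) set set"
  let ?R = "{(Inr (2, 0), Inr (1, 0)), (Inr (3, 0), Inr (1, 0)),
      (Inr (1, a), Inl (Inl u)), (Inr (2, Suc hh), Inl (Inr (Inl v))), (Inr (3, Suc jj), Inl (Inr (Inr w)))}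
      :: (('a + 'b + 'c) + nat \<times> nat) rel"
  have sub: "\<forall>e\<in>?E. e \<subseteq> ?V"
    by (auto dest!: pathE_sub subG subH subJ)
  have resp: "f p = f q" if "(p,q) \<in> ?R" for p q
    using that by (auto simp: f_def gs_def hs_def js_def)
  have rep: "(x, r (f x)) \<in> (?R \<union> ?R\<inverse>)\<^sup>*" if xV: "x \<in> ?V" for x
  proof -
    have a1: "(Inr (2, 0), Inr (1, 0)) \<in> (?R \<union> ?R\<inverse>)\<^sup>*" by (rule rt_f) simp
    have a2: "(Inr (3, 0), Inr (1, 0)) \<in> (?R \<union> ?R\<inverse>)\<^sup>*" by (rule rt_f) simp
    have a3: "(Inr (1, a), Inl (Inl u)) \<in> (?R \<union> ?R\<inverse>)\<^sup>*" by (rule rt_f) simp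
    have a4: "(Inr (2, Suc hh), Inl (Inr (Inl v))) \<in> (?R \<union> ?R\<inverse>)\<^sup>*" by (rule rt_f) simp
    have a5: "(Inr (3, Suc jj), Inl (Inr (Inr w))) \<in> (?R \<union> ?R\<inverse>)\<^sup>*" by (rule rt_f) simp
    have c0: "(Inr (1,0), r (f (Inr (1,0)))) \<in> (?R \<union> ?R\<inverse>)\<^sup>*"
    proof (cases "a = 0")
      case True
      then have "r (f (Inr (1,0))) = Inl (Inl u)" by (simp add: f_def r_def gs_def)
      then show ?thesis using a3 True by simp
    next
      case False
      then have "r (f (Inr (1,0))) = Inr (1,0)" by (simp add: f_def r_def gs_def)
      then show ?thesis by simp
    qed
    consider "x \<in> range Inl" | s where "x = Inr (1,s)" "s \<le> a" | s where "x = Inr (2,s)" "s \<le> Suc hh"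
      | s where "x = Inr (3,s)" "s \<le> Suc jj"
      using xV by (auto simp: pathV_def)
    then show ?thesis
    proof cases
      case 1
      then obtain y where "x = Inl y" by auto
      then have "r (f x) = x" by (simp add: f_def r_def)
      then show ?thesis by simp
    next
      case (2 s)
      show ?thesis
      proof (cases "s = a")
        case True
        then have "r (f x) = Inl (Inl u)" using 2 by (simp add: f_def r_def gs_def)
        then show ?thesis using 2 True a3 by simp
      next
        case False
        then have "r (f x) = x" using 2 by (simp add: f_def r_def gs_def)
        then show ?thesis by simp
      qed
    next
      case (3 s)
      show ?thesis
      proof (cases s)
        case 0
        have "r (f (Inr (2,0))) = r (f (Inr (1,0)))" by (simp add: f_def)
        then show ?thesis using 3 0 rtrancl_trans[OF a1 c0] by simp
      next
        case (Suc k)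
        show ?thesis
        proof (cases "k = hh")
          case True
          then have "r (f x) = Inl (Inr (Inl v))" using 3 Suc by (simp add: f_def r_def hs_def)
          then show ?thesis using 3 Suc True a4 by simp
        next
          case False
          then have "r (f x) = x" using 3 Suc by (simp add: f_def r_def hs_def)
          then show ?thesis by simp
        qed
      qed
    next
      case (4 s)
      show ?thesis
      proof (cases s)
        case 0
        have "r (f (Inr (3,0))) = r (f (Inr (1,0)))" by (simp add: f_def)
        then show ?thesis using 4 0 rtrancl_trans[OF a2 c0] by simp
      next
        case (Suc k)
        show ?thesis
        proof (cases "k = jj")
          case True
          then have "r (f x) = Inl (Inr (Inr w))" using 4 Suc by (simp add: f_def r_def js_def)
          then show ?thesis using 4 Suc True a5 by simp
        next
          case False
          then have "r (f x) = x" using 4 Suc by (simp add: f_def r_def js_def)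
          then show ?thesis by simp
        qed
      qed
    qed
  qed
  have q: "csf (quot_graph (?V, ?E) ?R) m = csf (img f (?V, ?E)) m"
    by (rule csf_quot[where h=r, OF sub resp rep]) auto
  have fV: "f ` ?V = V0 a hh jj"
  proof -
    have l1: "pathV (\<lambda>s. f (Inr (1,s))) a = pathV (gs a) a" by (rule pathV_cong) (simp add: f_def)
    have l2: "pathV (\<lambda>s. f (Inr (2,s))) (Suc hh) = insert (gs a 0) (pathV (hs hh) hh)"
      by (simp only: pathV_Suc0) (simp add: f_def cong: pathV_cong)
    have l3: "pathV (\<lambda>s. f (Inr (3,s))) (Suc jj) = insert (gs a 0) (pathV (js jj) jj)"
      by (simp only: pathV_Suc0) (simp add: f_def cong: pathV_cong)
    have "f ` ?V = (Inl \<circ> Inl) ` fst G \<union> (Inl \<circ> Inr \<circ> Inl) ` fst H \<union> (Inl \<circ> Inr \<circ> Inr) ` fst J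
        \<union> pathV (\<lambda>s. f (Inr (1,s))) a \<union> pathV (\<lambda>s. f (Inr (2,s))) (Suc hh) \<union> pathV (\<lambda>s. f (Inr (3,s))) (Suc jj)"
      by (simp only: image_Un pathV_img) (auto simp: f_def image_iff)
    then show ?thesis unfolding l1 l2 l3 V0_def using gs0_in by auto
  qed
  have fE: "(\<lambda>e. f ` e) ` ?E = insert {gs a 0, js jj 0} (insert {gs a 0, hs hh 0} (E0 a hh jj))"
  proof -
    have l1: "pathE (\<lambda>s. f (Inr (1,s))) a = pathE (gs a) a" by (rule pathE_cong) (simp add: f_def)
    have l2: "pathE (\<lambda>s. f (Inr (2,s))) (Suc hh) = insert {gs a 0, hs hh 0} (pathE (hs hh) hh)"
      by (simp only: pathE_Suc0) (simp add: f_def cong: pathE_cong)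
    have l3: "pathE (\<lambda>s. f (Inr (3,s))) (Suc jj) = insert {gs a 0, js jj 0} (pathE (js jj) jj)"
      by (simp only: pathE_Suc0) (simp add: f_def cong: pathE_cong)
    have g: "(\<lambda>e. f ` e) ` (\<lambda>e. (Inl \<circ> Inl) ` e) ` snd G = (\<lambda>e. (Inl \<circ> Inl) ` e) ` snd G"
      by (simp add: image_image f_def)
    have h: "(\<lambda>e. f ` e) ` (\<lambda>e. (Inl \<circ> Inr \<circ> Inl) ` e) ` snd H = (\<lambda>e. (Inl \<circ> Inr \<circ> Inl) ` e) ` snd H"
      by (simp add: image_image f_def)
    have j: "(\<lambda>e. f ` e) ` (\<lambda>e. (Inl \<circ> Inr \<circ> Inr) ` e) ` snd J = (\<lambda>e. (Inl \<circ> Inr \<circ> Inr) ` e) ` snd J"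
      by (simp add: image_image f_def)
    have "(\<lambda>e. f ` e) ` ?E = (\<lambda>e. (Inl \<circ> Inl) ` e) ` snd G \<union> (\<lambda>e. (Inl \<circ> Inr \<circ> Inl) ` e) ` snd H
        \<union> (\<lambda>e. (Inl \<circ> Inr \<circ> Inr) ` e) ` snd J
        \<union> pathE (\<lambda>s. f (Inr (1,s))) a \<union> pathE (\<lambda>s. f (Inr (2,s))) (Suc hh) \<union> pathE (\<lambda>s. f (Inr (3,s))) (Suc jj)"
      by (simp only: image_Un pathE_img g h j)
    then show ?thesis unfolding l1 l2 l3 E0_def by auto
  qed
  show ?thesis unfolding S_pre q img_def using fV fE by simp
qed

lemma S2:
  "csf (S_graph (Suc a) (Suc hh) jj G u H v J w) m
   = csf (V0 a hh jj, insert {gs a 0, js jj 0} (insert {js jj 0, hs hh 0} (E0 a hh jj))) m"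
proof -
  define f where "f x = (case x of Inl y \<Rightarrow> Inl y | Inr (i,s) \<Rightarrow>
     if i = 3 then js jj s else if s = 0 then js jj 0 else if i = 1 then gs a (s-1) else hs hh (s-1))"
    for x :: "('a + 'b + 'c) + nat \<times> nat"
  define r where "r y = (case y of Inl z \<Rightarrow> Inl z | Inr (i,k) \<Rightarrow> if i = 3 then Inr (3,k) else Inr (i, Suc k))"
    for y :: "('a + 'b + 'c) + nat \<times> nat"
  let ?V = "(Inl \<circ> Inl) ` fst G \<union> (Inl \<circ> Inr \<circ> Inl) ` fst H \<union> (Inl \<circ> Inr \<circ> Inr) ` fst J
        \<union> pathV (\<lambda>s. Inr (1,s)) (Suc a) \<union> pathV (\<lambda>s. Inr (2,s)) (Suc hh) \<union> pathV (\<lambda>s. Inr (3,s)) jj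
        :: (('a + 'b + 'c) + nat \<times> nat) set"
  let ?E = "(\<lambda>e. (Inl \<circ> Inl) ` e) ` snd G \<union> (\<lambda>e. (Inl \<circ> Inr \<circ> Inl) ` e) ` snd H
        \<union> (\<lambda>e. (Inl \<circ> Inr \<circ> Inr) ` e) ` snd J
        \<union> pathE (\<lambda>s. Inr (1,s)) (Suc a) \<union> pathE (\<lambda>s. Inr (2,s)) (Suc hh) \<union> pathE (\<lambda>s. Inr (3,s)) jj
        :: (('a + 'b + 'c) + nat \<times> nat) set set"
  let ?R = "{(Inr (2, 0), Inr (1, 0)), (Inr (3, 0), Inr (1, 0)),
      (Inr (1, Suc a), Inl (Inl u)), (Inr (2, Suc hh), Inl (Inr (Inl v))), (Inr (3, jj), Inl (Inr (Inr w)))}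
      :: (('a + 'b + 'c) + nat \<times> nat) rel"
  have sub: "\<forall>e\<in>?E. e \<subseteq> ?V"
    by (auto dest!: pathE_sub subG subH subJ)
  have resp: "f p = f q" if "(p,q) \<in> ?R" for p q
    using that by (auto simp: f_def gs_def hs_def js_def)
  have rep: "(x, r (f x)) \<in> (?R \<union> ?R\<inverse>)\<^sup>*" if xV: "x \<in> ?V" for x
  proof -
    have a1: "(Inr (2, 0), Inr (1, 0)) \<in> (?R \<union> ?R\<inverse>)\<^sup>*" by (rule rt_f) simp
    have a2: "(Inr (1, 0), Inr (3, 0)) \<in> (?R \<union> ?R\<inverse>)\<^sup>*" by (rule rt_b) simp
    have a3: "(Inr (1, Suc a), Inl (Inl u)) \<in> (?R \<union> ?R\<inverse>)\<^sup>*" by (rule rt_f) simp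
    have a4: "(Inr (2, Suc hh), Inl (Inr (Inl v))) \<in> (?R \<union> ?R\<inverse>)\<^sup>*" by (rule rt_f) simp
    have a5: "(Inr (3, jj), Inl (Inr (Inr w))) \<in> (?R \<union> ?R\<inverse>)\<^sup>*" by (rule rt_f) simp
    have c0: "(Inr (3,0), r (f (Inr (3,0)))) \<in> (?R \<union> ?R\<inverse>)\<^sup>*"
    proof (cases "jj = 0")
      case True
      then have "r (f (Inr (3,0))) = Inl (Inr (Inr w))" by (simp add: f_def r_def js_def)
      then show ?thesis using a5 True by simp
    next
      case False
      then have "r (f (Inr (3,0))) = Inr (3,0)" by (simp add: f_def r_def js_def)
      then show ?thesis by simp
    qed
    have c1: "(Inr (1,0), r (f (Inr (1,0)))) \<in> (?R \<union> ?R\<inverse>)\<^sup>*"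
    proof -
      have "r (f (Inr (1,0))) = r (f (Inr (3,0)))" by (simp add: f_def)
      then show ?thesis using rtrancl_trans[OF a2 c0] by simp
    qed
    consider "x \<in> range Inl" | s where "x = Inr (1,s)" "s \<le> Suc a" | s where "x = Inr (2,s)" "s \<le> Suc hh"
      | s where "x = Inr (3,s)" "s \<le> jj"
      using xV by (auto simp: pathV_def)
    then show ?thesis
    proof cases
      case 1
      then obtain y where "x = Inl y" by auto
      then have "r (f x) = x" by (simp add: f_def r_def)
      then show ?thesis by simp
    next
      case (2 s)
      show ?thesis
      proof (cases s)
        case 0
        then show ?thesis using 2 c1 by simp
      next
        case (Suc k)
        show ?thesis
        proof (cases "k = a")
          case True
          then have "r (f x) = Inl (Inl u)" using 2 Suc by (simp add: f_def r_def gs_def)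
          then show ?thesis using 2 Suc True a3 by simp
        next
          case False
          then have "r (f x) = x" using 2 Suc by (simp add: f_def r_def gs_def)
          then show ?thesis by simp
        qed
      qed
    next
      case (3 s)
      show ?thesis
      proof (cases s)
        case 0
        have "r (f (Inr (2,0))) = r (f (Inr (1,0)))" by (simp add: f_def)
        then show ?thesis using 3 0 rtrancl_trans[OF a1 c1] by simp
      next
        case (Suc k)
        show ?thesis
        proof (cases "k = hh")
          case True
          then have "r (f x) = Inl (Inr (Inl v))" using 3 Suc by (simp add: f_def r_def hs_def)
          then show ?thesis using 3 Suc True a4 by simp
        next
          case False
          then have "r (f x) = x" using 3 Suc by (simp add: f_def r_def hs_def)
          then show ?thesis by simp
        qed
      qed
    next
      case (4 s)
      show ?thesis
      proof (cases "s = jj")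
        case True
        then have "r (f x) = Inl (Inr (Inr w))" using 4 by (simp add: f_def r_def js_def)
        then show ?thesis using 4 True a5 by simp
      next
        case False
        then have "r (f x) = x" using 4 by (simp add: f_def r_def js_def)
        then show ?thesis by simp
      qed
    qed
  qed
  have q: "csf (quot_graph (?V, ?E) ?R) m = csf (img f (?V, ?E)) m"
    by (rule csf_quot[where h=r, OF sub resp rep]) auto
  have fV: "f ` ?V = V0 a hh jj"
  proof -
    have l1: "pathV (\<lambda>s. f (Inr (1,s))) (Suc a) = insert (js jj 0) (pathV (gs a) a)"
      by (simp only: pathV_Suc0) (simp add: f_def cong: pathV_cong)
    have l2: "pathV (\<lambda>s. f (Inr (2,s))) (Suc hh) = insert (js jj 0) (pathV (hs hh) hh)"
      by (simp only: pathV_Suc0) (simp add: f_def cong: pathV_cong)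
    have l3: "pathV (\<lambda>s. f (Inr (3,s))) jj = pathV (js jj) jj"
      by (rule pathV_cong) (simp add: f_def)
    have "f ` ?V = (Inl \<circ> Inl) ` fst G \<union> (Inl \<circ> Inr \<circ> Inl) ` fst H \<union> (Inl \<circ> Inr \<circ> Inr) ` fst J
        \<union> pathV (\<lambda>s. f (Inr (1,s))) (Suc a) \<union> pathV (\<lambda>s. f (Inr (2,s))) (Suc hh) \<union> pathV (\<lambda>s. f (Inr (3,s))) jj"
      by (simp only: image_Un pathV_img) (auto simp: f_def image_iff)
    then show ?thesis unfolding l1 l2 l3 V0_def using js0_in by auto
  qed
  have fE: "(\<lambda>e. f ` e) ` ?E = insert {gs a 0, js jj 0} (insert {js jj 0, hs hh 0} (E0 a hh jj))"
  proof -
    have l1: "pathE (\<lambda>s. f (Inr (1,s))) (Suc a) = insert {js jj 0, gs a 0} (pathE (gs a) a)"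
      by (simp only: pathE_Suc0) (simp add: f_def cong: pathE_cong)
    have l2: "pathE (\<lambda>s. f (Inr (2,s))) (Suc hh) = insert {js jj 0, hs hh 0} (pathE (hs hh) hh)"
      by (simp only: pathE_Suc0) (simp add: f_def cong: pathE_cong)
    have l3: "pathE (\<lambda>s. f (Inr (3,s))) jj = pathE (js jj) jj"
      by (rule pathE_cong) (simp add: f_def)
    have g: "(\<lambda>e. f ` e) ` (\<lambda>e. (Inl \<circ> Inl) ` e) ` snd G = (\<lambda>e. (Inl \<circ> Inl) ` e) ` snd G"
      by (simp add: image_image f_def)
    have h: "(\<lambda>e. f ` e) ` (\<lambda>e. (Inl \<circ> Inr \<circ> Inl) ` e) ` snd H = (\<lambda>e. (Inl \<circ> Inr \<circ> Inl) ` e) ` snd H"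
      by (simp add: image_image f_def)
    have j: "(\<lambda>e. f ` e) ` (\<lambda>e. (Inl \<circ> Inr \<circ> Inr) ` e) ` snd J = (\<lambda>e. (Inl \<circ> Inr \<circ> Inr) ` e) ` snd J"
      by (simp add: image_image f_def)
    have "(\<lambda>e. f ` e) ` ?E = (\<lambda>e. (Inl \<circ> Inl) ` e) ` snd G \<union> (\<lambda>e. (Inl \<circ> Inr \<circ> Inl) ` e) ` snd H
        \<union> (\<lambda>e. (Inl \<circ> Inr \<circ> Inr) ` e) ` snd J
        \<union> pathE (\<lambda>s. f (Inr (1,s))) (Suc a) \<union> pathE (\<lambda>s. f (Inr (2,s))) (Suc hh) \<union> pathE (\<lambda>s. f (Inr (3,s))) jj"
      by (simp only: image_Un pathE_img g h j)
    moreover have "{js jj 0, gs a 0} = {gs a 0, js jj 0}" by (rule insert_commute)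
    ultimately show ?thesis unfolding l1 l2 l3 E0_def by auto
  qed
  show ?thesis unfolding S_pre q img_def using fV fE by simp
qed

end



context spider begin

lemma PGH:
  "csf (Pk_graph (a + Suc hh) G u H v) m
   = csf ((Inl \<circ> Inl) ` fst G \<union> (Inl \<circ> Inr \<circ> Inl) ` fst H \<union> pathV (gs a) a \<union> pathV (hs hh) hh,
          (\<lambda>e. (Inl \<circ> Inl) ` e) ` snd G \<union> (\<lambda>e. (Inl \<circ> Inr \<circ> Inl) ` e) ` snd H
          \<union> pathE (gs a) a \<union> insert {gs a 0, hs hh 0} (pathE (hs hh) hh)) m"
proof -
  define f where "f x = (case x of Inl (Inl y) \<Rightarrow> Inl (Inl y) | Inl (Inr y) \<Rightarrow> Inl (Inr (Inl y))
     | Inr i \<Rightarrow> if i \<le> a then gs a (a - i) else hs hh (i - Suc a))"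
    for x :: "('a + 'b) + nat"
  define r where "r y = (case y of Inl (Inl z) \<Rightarrow> Inl (Inl z) | Inl (Inr (Inl z)) \<Rightarrow> Inl (Inr z)
     | Inl (Inr (Inr z)) \<Rightarrow> undefined | Inr (i,k) \<Rightarrow> if i = 1 then Inr (a - k) else Inr (Suc a + k))"
    for y :: "('a + 'b + 'c) + nat \<times> nat"
  let ?k = "a + Suc hh"
  let ?V = "(Inl \<circ> Inl) ` fst G \<union> (Inl \<circ> Inr) ` fst H \<union> pathV Inr ?k :: (('a + 'b) + nat) set"
  let ?E = "(\<lambda>e. (Inl \<circ> Inl) ` e) ` snd G \<union> (\<lambda>e. (Inl \<circ> Inr) ` e) ` snd H \<union> pathE Inr ?k
     :: (('a + 'b) + nat) set set"
  let ?R = "{(Inr 0, Inl (Inl u)), (Inr ?k, Inl (Inr v))} :: (('a + 'b) + nat) rel"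
  have sub: "\<forall>e\<in>?E. e \<subseteq> ?V"
    by (auto dest!: pathE_sub subG subH)
  have resp: "f p = f q" if "(p,q) \<in> ?R" for p q
    using that by (auto simp: f_def gs_def hs_def)
  have rep: "(x, r (f x)) \<in> (?R \<union> ?R\<inverse>)\<^sup>*" if xV: "x \<in> ?V" for x
  proof -
    have a1: "(Inr 0, Inl (Inl u)) \<in> (?R \<union> ?R\<inverse>)\<^sup>*" by (rule rt_f) simp
    have a2: "(Inr ?k, Inl (Inr v)) \<in> (?R \<union> ?R\<inverse>)\<^sup>*" by (rule rt_f) simp
    consider y where "x = Inl (Inl y)" | y where "x = Inl (Inr y)" | i where "x = Inr i" "i \<le> ?k"
      using xV by (auto simp: pathV_def)
    then show ?thesis
    proof cases
      case (1 y)
      then have "r (f x) = x" by (simp add: f_def r_def)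
      then show ?thesis by simp
    next
      case (2 y)
      then have "r (f x) = x" by (simp add: f_def r_def)
      then show ?thesis by simp
    next
      case (3 i)
      show ?thesis
      proof (cases "i \<le> a")
        case True
        show ?thesis
        proof (cases "i = 0")
          case True
          then have "r (f x) = Inl (Inl u)" using 3 by (simp add: f_def r_def gs_def)
          then show ?thesis using 3 True a1 by simp
        next
          case False
          then have "r (f x) = x" using 3 \<open>i \<le> a\<close> by (simp add: f_def r_def gs_def)
          then show ?thesis by simp
        qed
      next
        case False
        show ?thesis
        proof (cases "i = ?k")
          case True
          then have "r (f x) = Inl (Inr v)" using 3 by (simp add: f_def r_def hs_def)
          then show ?thesis using 3 True a2 by simp
        next
          case F2: False
          then have "r (f x) = x" using 3 False by (simp add: f_def r_def hs_def)
          then show ?thesis by simp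
        qed
      qed
    qed
  qed
  have q: "csf (quot_graph (?V, ?E) ?R) m = csf (img f (?V, ?E)) m"
    by (rule csf_quot[where h=r, OF sub resp rep]) auto
  have pv: "pathV (\<lambda>i. f (Inr i)) ?k = pathV (gs a) a \<union> insert (gs a 0) (pathV (hs hh) hh)"
  proof -
    have "pathV (\<lambda>i. f (Inr i)) ?k = pathV (\<lambda>i. f (Inr i)) a \<union> pathV (\<lambda>i. f (Inr (a + i))) (Suc hh)"
      by (rule pathV_add)
    moreover have "pathV (\<lambda>i. f (Inr i)) a = pathV (gs a) a"
    proof -
      have "pathV (\<lambda>i. f (Inr i)) a = pathV (\<lambda>i. gs a (a - i)) a" by (rule pathV_cong) (simp add: f_def)
      then show ?thesis by (simp only: pathV_rev)
    qed
    moreover have "pathV (\<lambda>i. f (Inr (a + i))) (Suc hh) = insert (gs a 0) (pathV (hs hh) hh)"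
      by (simp only: pathV_Suc0) (simp add: f_def cong: pathV_cong)
    ultimately show ?thesis by simp
  qed
  have pe: "pathE (\<lambda>i. f (Inr i)) ?k = pathE (gs a) a \<union> insert {gs a 0, hs hh 0} (pathE (hs hh) hh)"
  proof -
    have "pathE (\<lambda>i. f (Inr i)) ?k = pathE (\<lambda>i. f (Inr i)) a \<union> pathE (\<lambda>i. f (Inr (a + i))) (Suc hh)"
      by (rule pathE_add)
    moreover have "pathE (\<lambda>i. f (Inr i)) a = pathE (gs a) a"
    proof -
      have "pathE (\<lambda>i. f (Inr i)) a = pathE (\<lambda>i. gs a (a - i)) a" by (rule pathE_cong) (simp add: f_def)
      then show ?thesis by (simp only: pathE_rev)
    qed
    moreover have "pathE (\<lambda>i. f (Inr (a + i))) (Suc hh) = insert {gs a 0, hs hh 0} (pathE (hs hh) hh)"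
      by (simp only: pathE_Suc0) (simp add: f_def cong: pathE_cong)
    ultimately show ?thesis by simp
  qed
  have fV: "f ` ?V = (Inl \<circ> Inl) ` fst G \<union> (Inl \<circ> Inr \<circ> Inl) ` fst H \<union> pathV (gs a) a \<union> pathV (hs hh) hh"
  proof -
    have "f ` ?V = (Inl \<circ> Inl) ` fst G \<union> (Inl \<circ> Inr \<circ> Inl) ` fst H \<union> pathV (\<lambda>i. f (Inr i)) ?k"
      by (simp only: image_Un pathV_img) (auto simp: f_def image_iff)
    then show ?thesis unfolding pv using gs0_in by auto
  qed
  have fE: "(\<lambda>e. f ` e) ` ?E = (\<lambda>e. (Inl \<circ> Inl) ` e) ` snd G \<union> (\<lambda>e. (Inl \<circ> Inr \<circ> Inl) ` e) ` snd H
          \<union> pathE (gs a) a \<union> insert {gs a 0, hs hh 0} (pathE (hs hh) hh)"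
  proof -
    have g: "(\<lambda>e. f ` e) ` (\<lambda>e. (Inl \<circ> Inl) ` e) ` snd G = (\<lambda>e. (Inl \<circ> Inl) ` e) ` snd G"
      by (simp add: image_image f_def)
    have h: "(\<lambda>e. f ` e) ` (\<lambda>e. (Inl \<circ> Inr) ` e) ` snd H = (\<lambda>e. (Inl \<circ> Inr \<circ> Inl) ` e) ` snd H"
      by (simp add: image_image f_def)
    show ?thesis by (simp only: image_Un pathE_img g h pe) (simp add: Un_assoc)
  qed
  show ?thesis unfolding P_pre q img_def using fV fE by simp
qed

lemma PJ:
  "csf (pendant J w n) m = csf ((Inl \<circ> Inr \<circ> Inr) ` fst J \<union> pathV (js n) n, (\<lambda>e. (Inl \<circ> Inr \<circ> Inr) ` e) ` snd J \<union> pathE (js n) n) m"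
proof -
  define f where "f x = (case x of Inl (Inl y) \<Rightarrow> (Inl \<circ> Inr \<circ> Inr) y | Inl (Inr _) \<Rightarrow> js n 0
     | Inr i \<Rightarrow> js n (n - i))"
    for x :: "('c + unit) + nat"
  define r :: "('a + 'b + 'c) + nat \<times> nat \<Rightarrow> ('c + unit) + nat"
    where "r y = (case y of Inl (Inr (Inr z)) \<Rightarrow> Inl (Inl z) | Inl _ \<Rightarrow> undefined | Inr (i,k) \<Rightarrow> Inr (n - k))" for y
  let ?V = "(Inl \<circ> Inl) ` fst J \<union> (Inl \<circ> Inr) ` fst K1 \<union> pathV Inr n :: (('c + unit) + nat) set"
  let ?E = "(\<lambda>e. (Inl \<circ> Inl) ` e) ` snd J \<union> (\<lambda>e. (Inl \<circ> Inr) ` e) ` snd K1 \<union> pathE Inr n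
     :: (('c + unit) + nat) set set"
  let ?R = "{(Inr 0, Inl (Inl w)), (Inr n, Inl (Inr ()))} :: (('c + unit) + nat) rel"
  have sub: "\<forall>e\<in>?E. e \<subseteq> ?V"
    by (auto dest!: pathE_sub subJ simp: K1_def)
  have resp: "f p = f q" if "(p,q) \<in> ?R" for p q
    using that by (auto simp: f_def js_def)
  have rep: "(x, r (f x)) \<in> (?R \<union> ?R\<inverse>)\<^sup>*" if xV: "x \<in> ?V" for x
  proof -
    have a1: "(Inr 0, Inl (Inl w)) \<in> (?R \<union> ?R\<inverse>)\<^sup>*" by (rule rt_f) simp
    have a2: "(Inl (Inr ()), Inr n) \<in> (?R \<union> ?R\<inverse>)\<^sup>*" by (rule rt_b) simp
    consider y where "x = Inl (Inl y)" | "x = Inl (Inr ())" | i where "x = Inr i" "i \<le> n"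
      using xV by (auto simp: pathV_def K1_def)
    then show ?thesis
    proof cases
      case (1 y)
      then have "r (f x) = x" by (simp add: f_def r_def)
      then show ?thesis by simp
    next
      case 2
      show ?thesis
      proof (cases "n = 0")
        case True
        then have "r (f x) = Inl (Inl w)" using 2 by (simp add: f_def r_def js_def)
        then show ?thesis using 2 True a1 a2 by (simp add: rtrancl_trans)
      next
        case False
        then have "r (f x) = Inr n" using 2 by (simp add: f_def r_def js_def)
        then show ?thesis using 2 a2 by simp
      qed
    next
      case (3 i)
      show ?thesis
      proof (cases "i = 0")
        case True
        then have "r (f x) = Inl (Inl w)" using 3 by (simp add: f_def r_def js_def)
        then show ?thesis using 3 True a1 by simp
      next
        case False
        then have "r (f x) = x" using 3 by (simp add: f_def r_def js_def)
        then show ?thesis by simp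
      qed
    qed
  qed
  have q: "csf (quot_graph (?V, ?E) ?R) m = csf (img f (?V, ?E)) m"
    by (rule csf_quot[where h=r, OF sub resp rep]) auto
  have pv: "pathV (\<lambda>i. f (Inr i)) n = pathV (js n) n"
  proof -
    have "pathV (\<lambda>i. f (Inr i)) n = pathV (\<lambda>i. js n (n - i)) n" by (rule pathV_cong) (simp add: f_def)
    then show ?thesis by (simp only: pathV_rev)
  qed
  have pe: "pathE (\<lambda>i. f (Inr i)) n = pathE (js n) n"
  proof -
    have "pathE (\<lambda>i. f (Inr i)) n = pathE (\<lambda>i. js n (n - i)) n" by (rule pathE_cong) (simp add: f_def)
    then show ?thesis by (simp only: pathE_rev)
  qed
  have fV: "f ` ?V = (Inl \<circ> Inr \<circ> Inr) ` fst J \<union> pathV (js n) n"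
  proof -
    have "f ` ?V = (Inl \<circ> Inr \<circ> Inr) ` fst J \<union> {js n 0} \<union> pathV (\<lambda>i. f (Inr i)) n"
      by (simp only: image_Un pathV_img) (auto simp: f_def image_iff K1_def)
    then show ?thesis unfolding pv using js0_in by auto
  qed
  have fE: "(\<lambda>e. f ` e) ` ?E = (\<lambda>e. (Inl \<circ> Inr \<circ> Inr) ` e) ` snd J \<union> pathE (js n) n"
  proof -
    have g: "(\<lambda>e. f ` e) ` (\<lambda>e. (Inl \<circ> Inl) ` e) ` snd J = (\<lambda>e. (Inl \<circ> Inr \<circ> Inr) ` e) ` snd J"
      by (simp add: image_image f_def)
    show ?thesis by (simp only: image_Un pathE_img g pe) (simp add: K1_def)
  qed
  show ?thesis unfolding pendant_def P_pre q img_def using fV fE by simp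
qed

lemma PG:
  "csf (pendant G u n) m = csf ((Inl \<circ> Inl) ` fst G \<union> pathV (gs n) n, (\<lambda>e. (Inl \<circ> Inl) ` e) ` snd G \<union> pathE (gs n) n) m"
proof -
  define f where "f x = (case x of Inl (Inl y) \<Rightarrow> (Inl \<circ> Inl) y | Inl (Inr _) \<Rightarrow> gs n 0
     | Inr i \<Rightarrow> gs n (n - i))"
    for x :: "('a + unit) + nat"
  define r :: "('a + 'b + 'c) + nat \<times> nat \<Rightarrow> ('a + unit) + nat"
    where "r y = (case y of Inl (Inl z) \<Rightarrow> Inl (Inl z) | Inl _ \<Rightarrow> undefined | Inr (i,k) \<Rightarrow> Inr (n - k))" for y
  let ?V = "(Inl \<circ> Inl) ` fst G \<union> (Inl \<circ> Inr) ` fst K1 \<union> pathV Inr n :: (('a + unit) + nat) set"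
  let ?E = "(\<lambda>e. (Inl \<circ> Inl) ` e) ` snd G \<union> (\<lambda>e. (Inl \<circ> Inr) ` e) ` snd K1 \<union> pathE Inr n
     :: (('a + unit) + nat) set set"
  let ?R = "{(Inr 0, Inl (Inl u)), (Inr n, Inl (Inr ()))} :: (('a + unit) + nat) rel"
  have sub: "\<forall>e\<in>?E. e \<subseteq> ?V"
    by (auto dest!: pathE_sub subG simp: K1_def)
  have resp: "f p = f q" if "(p,q) \<in> ?R" for p q
    using that by (auto simp: f_def gs_def)
  have rep: "(x, r (f x)) \<in> (?R \<union> ?R\<inverse>)\<^sup>*" if xV: "x \<in> ?V" for x
  proof -
    have a1: "(Inr 0, Inl (Inl u)) \<in> (?R \<union> ?R\<inverse>)\<^sup>*" by (rule rt_f) simp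
    have a2: "(Inl (Inr ()), Inr n) \<in> (?R \<union> ?R\<inverse>)\<^sup>*" by (rule rt_b) simp
    consider y where "x = Inl (Inl y)" | "x = Inl (Inr ())" | i where "x = Inr i" "i \<le> n"
      using xV by (auto simp: pathV_def K1_def)
    then show ?thesis
    proof cases
      case (1 y)
      then have "r (f x) = x" by (simp add: f_def r_def)
      then show ?thesis by simp
    next
      case 2
      show ?thesis
      proof (cases "n = 0")
        case True
        then have "r (f x) = Inl (Inl u)" using 2 by (simp add: f_def r_def gs_def)
        then show ?thesis using 2 True a1 a2 by (simp add: rtrancl_trans)
      next
        case False
        then have "r (f x) = Inr n" using 2 by (simp add: f_def r_def gs_def)
        then show ?thesis using 2 a2 by simp
      qed
    next
      case (3 i)
      show ?thesis
      proof (cases "i = 0")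
        case True
        then have "r (f x) = Inl (Inl u)" using 3 by (simp add: f_def r_def gs_def)
        then show ?thesis using 3 True a1 by simp
      next
        case False
        then have "r (f x) = x" using 3 by (simp add: f_def r_def gs_def)
        then show ?thesis by simp
      qed
    qed
  qed
  have q: "csf (quot_graph (?V, ?E) ?R) m = csf (img f (?V, ?E)) m"
    by (rule csf_quot[where h=r, OF sub resp rep]) auto
  have pv: "pathV (\<lambda>i. f (Inr i)) n = pathV (gs n) n"
  proof -
    have "pathV (\<lambda>i. f (Inr i)) n = pathV (\<lambda>i. gs n (n - i)) n" by (rule pathV_cong) (simp add: f_def)
    then show ?thesis by (simp only: pathV_rev)
  qed
  have pe: "pathE (\<lambda>i. f (Inr i)) n = pathE (gs n) n"
  proof -
    have "pathE (\<lambda>i. f (Inr i)) n = pathE (\<lambda>i. gs n (n - i)) n" by (rule pathE_cong) (simp add: f_def)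
    then show ?thesis by (simp only: pathE_rev)
  qed
  have fV: "f ` ?V = (Inl \<circ> Inl) ` fst G \<union> pathV (gs n) n"
  proof -
    have "f ` ?V = (Inl \<circ> Inl) ` fst G \<union> {gs n 0} \<union> pathV (\<lambda>i. f (Inr i)) n"
      by (simp only: image_Un pathV_img) (auto simp: f_def image_iff K1_def)
    then show ?thesis unfolding pv using gs0_in by auto
  qed
  have fE: "(\<lambda>e. f ` e) ` ?E = (\<lambda>e. (Inl \<circ> Inl) ` e) ` snd G \<union> pathE (gs n) n"
  proof -
    have g: "(\<lambda>e. f ` e) ` (\<lambda>e. (Inl \<circ> Inl) ` e) ` snd G = (\<lambda>e. (Inl \<circ> Inl) ` e) ` snd G"
      by (simp add: image_image f_def)
    show ?thesis by (simp only: image_Un pathE_img g pe) (simp add: K1_def)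
  qed
  show ?thesis unfolding pendant_def P_pre q img_def using fV fE by simp
qed

lemma PHJ:
  "csf (Pk_graph (Suc hh + jj) H v J w) m
   = csf ((Inl \<circ> Inr \<circ> Inl) ` fst H \<union> (Inl \<circ> Inr \<circ> Inr) ` fst J \<union> pathV (hs hh) hh \<union> pathV (js jj) jj,
          (\<lambda>e. (Inl \<circ> Inr \<circ> Inl) ` e) ` snd H \<union> (\<lambda>e. (Inl \<circ> Inr \<circ> Inr) ` e) ` snd J
          \<union> pathE (hs hh) hh \<union> insert {hs hh 0, js jj 0} (pathE (js jj) jj)) m"
proof -
  define f :: "('b + 'c) + nat \<Rightarrow> ('a + 'b + 'c) + nat \<times> nat"
    where "f x = (case x of Inl (Inl y) \<Rightarrow> Inl (Inr (Inl y)) | Inl (Inr y) \<Rightarrow> Inl (Inr (Inr y))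
     | Inr i \<Rightarrow> if i \<le> hh then hs hh (hh - i) else js jj (i - Suc hh))" for x
  define r :: "('a + 'b + 'c) + nat \<times> nat \<Rightarrow> ('b + 'c) + nat"
    where "r y = (case y of Inl (Inr (Inl z)) \<Rightarrow> Inl (Inl z) | Inl (Inr (Inr z)) \<Rightarrow> Inl (Inr z)
     | Inl (Inl z) \<Rightarrow> undefined | Inr (i,k) \<Rightarrow> if i = 2 then Inr (hh - k) else Inr (Suc hh + k))" for y
  let ?k = "Suc hh + jj"
  let ?V = "(Inl \<circ> Inl) ` fst H \<union> (Inl \<circ> Inr) ` fst J \<union> pathV Inr ?k :: (('b + 'c) + nat) set"
  let ?E = "(\<lambda>e. (Inl \<circ> Inl) ` e) ` snd H \<union> (\<lambda>e. (Inl \<circ> Inr) ` e) ` snd J \<union> pathE Inr ?k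
     :: (('b + 'c) + nat) set set"
  let ?R = "{(Inr 0, Inl (Inl v)), (Inr ?k, Inl (Inr w))} :: (('b + 'c) + nat) rel"
  have sub: "\<forall>e\<in>?E. e \<subseteq> ?V"
    by (auto dest!: pathE_sub subH subJ)
  have resp: "f p = f q" if "(p,q) \<in> ?R" for p q
    using that by (auto simp: f_def hs_def js_def)
  have rep: "(x, r (f x)) \<in> (?R \<union> ?R\<inverse>)\<^sup>*" if xV: "x \<in> ?V" for x
  proof -
    have a1: "(Inr 0, Inl (Inl v)) \<in> (?R \<union> ?R\<inverse>)\<^sup>*" by (rule rt_f) simp
    have a2: "(Inr ?k, Inl (Inr w)) \<in> (?R \<union> ?R\<inverse>)\<^sup>*" by (rule rt_f) simp
    consider y where "x = Inl (Inl y)" | y where "x = Inl (Inr y)" | i where "x = Inr i" "i \<le> ?k"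
      using xV by (auto simp: pathV_def)
    then show ?thesis
    proof cases
      case (1 y)
      then have "r (f x) = x" by (simp add: f_def r_def)
      then show ?thesis by simp
    next
      case (2 y)
      then have "r (f x) = x" by (simp add: f_def r_def)
      then show ?thesis by simp
    next
      case (3 i)
      show ?thesis
      proof (cases "i \<le> hh")
        case True
        show ?thesis
        proof (cases "i = 0")
          case True
          then have "r (f x) = Inl (Inl v)" using 3 by (simp add: f_def r_def hs_def)
          then show ?thesis using 3 True a1 by simp
        next
          case False
          then have "r (f x) = x" using 3 \<open>i \<le> hh\<close> by (simp add: f_def r_def hs_def)
          then show ?thesis by simp
        qed
      next
        case False
        show ?thesis
        proof (cases "i = ?k")
          case True
          then have "r (f x) = Inl (Inr w)" using 3 by (simp add: f_def r_def js_def)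
          then show ?thesis using 3 True a2 by simp
        next
          case F2: False
          then have "r (f x) = x" using 3 False by (simp add: f_def r_def js_def)
          then show ?thesis by simp
        qed
      qed
    qed
  qed
  have q: "csf (quot_graph (?V, ?E) ?R) m = csf (img f (?V, ?E)) m"
    by (rule csf_quot[where h=r, OF sub resp rep]) auto
  have kk: "?k = hh + Suc jj" by simp
  have pv: "pathV (\<lambda>i. f (Inr i)) ?k = pathV (hs hh) hh \<union> insert (hs hh 0) (pathV (js jj) jj)"
  proof -
    have "pathV (\<lambda>i. f (Inr i)) (hh + Suc jj) = pathV (\<lambda>i. f (Inr i)) hh \<union> pathV (\<lambda>i. f (Inr (hh + i))) (Suc jj)"
      by (rule pathV_add)
    moreover have "pathV (\<lambda>i. f (Inr i)) hh = pathV (hs hh) hh"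
    proof -
      have "pathV (\<lambda>i. f (Inr i)) hh = pathV (\<lambda>i. hs hh (hh - i)) hh" by (rule pathV_cong) (simp add: f_def)
      then show ?thesis by (simp only: pathV_rev)
    qed
    moreover have "pathV (\<lambda>i. f (Inr (hh + i))) (Suc jj) = insert (hs hh 0) (pathV (js jj) jj)"
      by (simp only: pathV_Suc0) (simp add: f_def cong: pathV_cong)
    ultimately show ?thesis by (simp only: kk)
  qed
  have pe: "pathE (\<lambda>i. f (Inr i)) ?k = pathE (hs hh) hh \<union> insert {hs hh 0, js jj 0} (pathE (js jj) jj)"
  proof -
    have "pathE (\<lambda>i. f (Inr i)) (hh + Suc jj) = pathE (\<lambda>i. f (Inr i)) hh \<union> pathE (\<lambda>i. f (Inr (hh + i))) (Suc jj)"
      by (rule pathE_add)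
    moreover have "pathE (\<lambda>i. f (Inr i)) hh = pathE (hs hh) hh"
    proof -
      have "pathE (\<lambda>i. f (Inr i)) hh = pathE (\<lambda>i. hs hh (hh - i)) hh" by (rule pathE_cong) (simp add: f_def)
      then show ?thesis by (simp only: pathE_rev)
    qed
    moreover have "pathE (\<lambda>i. f (Inr (hh + i))) (Suc jj) = insert {hs hh 0, js jj 0} (pathE (js jj) jj)"
      by (simp only: pathE_Suc0) (simp add: f_def cong: pathE_cong)
    ultimately show ?thesis by (simp only: kk)
  qed
  have fV: "f ` ?V = (Inl \<circ> Inr \<circ> Inl) ` fst H \<union> (Inl \<circ> Inr \<circ> Inr) ` fst J \<union> pathV (hs hh) hh \<union> pathV (js jj) jj"
  proof -
    have "f ` ?V = (Inl \<circ> Inr \<circ> Inl) ` fst H \<union> (Inl \<circ> Inr \<circ> Inr) ` fst J \<union> pathV (\<lambda>i. f (Inr i)) ?k"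
      by (simp only: image_Un pathV_img) (auto simp: f_def image_iff)
    then show ?thesis unfolding pv using hs0_in by auto
  qed
  have fE: "(\<lambda>e. f ` e) ` ?E = (\<lambda>e. (Inl \<circ> Inr \<circ> Inl) ` e) ` snd H \<union> (\<lambda>e. (Inl \<circ> Inr \<circ> Inr) ` e) ` snd J
          \<union> pathE (hs hh) hh \<union> insert {hs hh 0, js jj 0} (pathE (js jj) jj)"
  proof -
    have g: "(\<lambda>e. f ` e) ` (\<lambda>e. (Inl \<circ> Inl) ` e) ` snd H = (\<lambda>e. (Inl \<circ> Inr \<circ> Inl) ` e) ` snd H"
      by (simp add: image_image f_def)
    have h: "(\<lambda>e. f ` e) ` (\<lambda>e. (Inl \<circ> Inr) ` e) ` snd J = (\<lambda>e. (Inl \<circ> Inr \<circ> Inr) ` e) ` snd J"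
      by (simp add: image_image f_def)
    show ?thesis by (simp only: image_Un pathE_img g h pe) (simp add: Un_assoc)
  qed
  show ?thesis unfolding P_pre q img_def using fV fE by simp
qed

end



context spider begin

lemma finV0: "finite (V0 a hh jj)"
  using finG finH finJ by (simp add: V0_def)

lemma step:
  "csf (S_graph a (Suc hh) (Suc jj) G u H v J w) m - csf (S_graph (Suc a) (Suc hh) jj G u H v J w) m
   = sf_times (csf (Pk_graph (a + Suc hh) G u H v)) (csf (pendant J w jj)) m
     - sf_times (csf (pendant G u a)) (csf (Pk_graph (Suc hh + jj) H v J w)) m"
proof -
  have d1: "gs a 0 \<noteq> js jj 0" by (simp add: gs_def js_def)
  have d2: "gs a 0 \<noteq> hs hh 0" by (simp add: gs_def hs_def)
  have d3: "js jj 0 \<noteq> hs hh 0" by (simp add: js_def hs_def)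
  have t: "csf (V0 a hh jj, insert {gs a 0, js jj 0} (insert {gs a 0, hs hh 0} (E0 a hh jj))) m
     - csf (V0 a hh jj, insert {gs a 0, js jj 0} (insert {js jj 0, hs hh 0} (E0 a hh jj))) m
     = csf (V0 a hh jj, insert {gs a 0, hs hh 0} (E0 a hh jj)) m - csf (V0 a hh jj, insert {js jj 0, hs hh 0} (E0 a hh jj)) m"
    by (rule triple[OF finV0 d1 d2 d3])
  let ?VA = "(Inl \<circ> Inl) ` fst G \<union> (Inl \<circ> Inr \<circ> Inl) ` fst H \<union> pathV (gs a) a \<union> pathV (hs hh) hh
     :: (('a + 'b + 'c) + nat \<times> nat) set"
  let ?EA = "(\<lambda>e. (Inl \<circ> Inl) ` e) ` snd G \<union> (\<lambda>e. (Inl \<circ> Inr \<circ> Inl) ` e) ` snd H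
          \<union> pathE (gs a) a \<union> insert {gs a 0, hs hh 0} (pathE (hs hh) hh)"
  let ?VB = "(Inl \<circ> Inr \<circ> Inr) ` fst J \<union> pathV (js jj) jj :: (('a + 'b + 'c) + nat \<times> nat) set"
  let ?EB = "(\<lambda>e. (Inl \<circ> Inr \<circ> Inr) ` e) ` snd J \<union> pathE (js jj) jj"
  let ?VC = "(Inl \<circ> Inl) ` fst G \<union> pathV (gs a) a :: (('a + 'b + 'c) + nat \<times> nat) set"
  let ?EC = "(\<lambda>e. (Inl \<circ> Inl) ` e) ` snd G \<union> pathE (gs a) a"
  let ?VD = "(Inl \<circ> Inr \<circ> Inl) ` fst H \<union> (Inl \<circ> Inr \<circ> Inr) ` fst J \<union> pathV (hs hh) hh \<union> pathV (js jj) jj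
     :: (('a + 'b + 'c) + nat \<times> nat) set"
  let ?ED = "(\<lambda>e. (Inl \<circ> Inr \<circ> Inl) ` e) ` snd H \<union> (\<lambda>e. (Inl \<circ> Inr \<circ> Inr) ` e) ` snd J
          \<union> pathE (hs hh) hh \<union> insert {hs hh 0, js jj 0} (pathE (js jj) jj)"
  have eA: "csf (Pk_graph (a + Suc hh) G u H v) = csf (?VA, ?EA)" by (rule ext) (rule PGH)
  have eB: "csf (pendant J w jj) = csf (?VB, ?EB)" by (rule ext) (rule PJ)
  have eC: "csf (pendant G u a) = csf (?VC, ?EC)" by (rule ext) (rule PG)
  have eD: "csf (Pk_graph (Suc hh + jj) H v J w) = csf (?VD, ?ED)" by (rule ext) (rule PHJ)
  have u1: "sf_times (csf (?VA, ?EA)) (csf (?VB, ?EB)) m = csf (?VA \<union> ?VB, ?EA \<union> ?EB) m"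
  proof (rule csf_union)
    show "finite ?VA" using finG finH by simp
    show "finite ?VB" using finJ by simp
    show "?VA \<inter> ?VB = {}" by (auto simp: pathV_def gs_def hs_def js_def)
    show "\<forall>e\<in>?EA. e \<subseteq> ?VA" using gs0_in[of a] hs0_in[of hh] by (auto dest!: pathE_sub subG subH)
    show "\<forall>e\<in>?EB. e \<subseteq> ?VB" by (auto dest!: pathE_sub subJ)
  qed
  have u2: "sf_times (csf (?VC, ?EC)) (csf (?VD, ?ED)) m = csf (?VC \<union> ?VD, ?EC \<union> ?ED) m"
  proof (rule csf_union)
    show "finite ?VC" using finG by simp
    show "finite ?VD" using finJ finH by simp
    show "?VC \<inter> ?VD = {}" by (auto simp: pathV_def gs_def hs_def js_def)
    show "\<forall>e\<in>?EC. e \<subseteq> ?VC" by (auto dest!: pathE_sub subG)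
    show "\<forall>e\<in>?ED. e \<subseteq> ?VD" using js0_in[of jj] hs0_in[of hh] by (auto dest!: pathE_sub subH subJ)
  qed
  have g1: "(?VA \<union> ?VB, ?EA \<union> ?EB) = (V0 a hh jj, insert {gs a 0, hs hh 0} (E0 a hh jj))"
    by (auto simp: V0_def E0_def)
  have g2: "(?VC \<union> ?VD, ?EC \<union> ?ED) = (V0 a hh jj, insert {js jj 0, hs hh 0} (E0 a hh jj))"
  proof -
    have "{hs hh 0, js jj 0} = {js jj 0, hs hh 0}" by (rule insert_commute)
    then show ?thesis by (auto simp: V0_def E0_def)
  qed
  show ?thesis
    unfolding S1 S2 eA eB eC eD u1 u2 g1 g2 by (rule t)
qed

end



context spider begin

lemma tele:
  "csf (S_graph g (Suc hh) j G u H v J w) m = csf (S_graph (g + j) (Suc hh) 0 G u H v J w) m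
     + (\<Sum>i = 1..j. sf_times (csf (Pk_graph (g + Suc hh + i - 1) G u H v)) (csf (pendant J w (j - i))) m
                     - sf_times (csf (pendant G u (g + i - 1))) (csf (Pk_graph (Suc hh + j - i) H v J w)) m)"
proof (induction j arbitrary: g)
  case 0
  then show ?case by simp
next
  case (Suc j)
  define D where "D g j i = sf_times (csf (Pk_graph (g + Suc hh + i - 1) G u H v)) (csf (pendant J w (j - i))) m
                     - sf_times (csf (pendant G u (g + i - 1))) (csf (Pk_graph (Suc hh + j - i) H v J w)) m"
    for g j i
  have st: "csf (S_graph g (Suc hh) (Suc j) G u H v J w) m
      = csf (S_graph (Suc g) (Suc hh) j G u H v J w) m + D g (Suc j) 1"
    using step[of g hh j m] by (simp add: D_def)
  have ih: "csf (S_graph (Suc g) (Suc hh) j G u H v J w) m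
      = csf (S_graph (g + Suc j) (Suc hh) 0 G u H v J w) m + (\<Sum>i = 1..j. D (Suc g) j i)"
    using Suc.IH[of "Suc g"] by (simp add: D_def)
  have sm: "(\<Sum>i = 1..Suc j. D g (Suc j) i) = D g (Suc j) 1 + (\<Sum>i = 1..j. D (Suc g) j i)"
  proof -
    have "(\<Sum>i = 1..Suc j. D g (Suc j) i) = D g (Suc j) 1 + (\<Sum>i = Suc 1..Suc j. D g (Suc j) i)"
      by (rule sum.atLeast_Suc_atMost) simp
    also have "(\<Sum>i = Suc 1..Suc j. D g (Suc j) i) = (\<Sum>i = 1..j. D g (Suc j) (Suc i))"
      by (rule sum.shift_bounds_cl_Suc_ivl)
    also have "\<dots> = (\<Sum>i = 1..j. D (Suc g) j i)"
      by (rule sum.cong) (simp_all add: D_def)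
    finally show ?thesis .
  qed
  have "csf (S_graph g (Suc hh) (Suc j) G u H v J w) m
      = csf (S_graph (g + Suc j) (Suc hh) 0 G u H v J w) m + (\<Sum>i = 1..Suc j. D g (Suc j) i)"
    using st ih sm by simp
  then show ?case by (simp add: D_def)
qed

end

theorem proposition4p2:
  fixes G :: "'a graph" and u :: 'a and H :: "'b graph" and v :: 'b
    and J :: "'c graph" and w :: 'c and g h j :: nat
  assumes "wf_graph G" "u \<in> fst G" "wf_graph H" "v \<in> fst H" "wf_graph J" "w \<in> fst J"
    and "h \<ge> 1"
  shows "csf (S_graph g h j G u H v J w) =
    (\<lambda>m. csf (S_graph (g + j) h 0 G u H v J w) m
       + (\<Sum>i = 1..j. sf_times (csf (Pk_graph (g + h + i - 1) G u H v)) (csf (pendant J w (j - i))) m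
                     - sf_times (csf (pendant G u (g + i - 1))) (csf (Pk_graph (h + j - i) H v J w)) m))"
proof -
  interpret spider G u H v J w using assms(1-6) by unfold_locales
  obtain hh where hh: "h = Suc hh" using assms(7) by (cases h) auto
  show ?thesis unfolding hh by (rule ext) (rule tele)
qed


end
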